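(* Let $S$ be a semigroup and let $\mathcal{R}'$ and $\leq_l$ be binary relations on $S$. Write $\mathcal{L}'$ for the relation $\leq_l \cap \geq_l$, write $L'_a$ for the $\mathcal{L}'$-class of $a\in S$, and (when $\leq_l$ is a preorder) write $\wedge$ for the meet of $\mathcal{L}'$-classes with respect to the partial order on $S/\mathcal{L}'$ induced by $\leq_l$, where such meets exist. Then $S$ has a semigroup of straight left I-quotients $Q$ (i.e. $S$ embeds as a straight left I-order in an inverse semigroup $Q$) such that \[\mathcal{R}^Q\cap(S\times S)=\mathcal{R}' \quad\text{and}\quad \leq_{\mathcal{L}^Q}\cap\,(S\times S)=\ \leq_l\] if and only if all of the following hold: $\mathcal{R}'$ is a left compatible equivalence relation on $S$; $\leq_l$ is a preorder on $S$ such that the $\mathcal{L}'$-classes form a meet semilattice under the associated partial order; and $S$ satisfies: \begin{itemize} \item[(M1)] For all $\alpha,\beta\in S$ there exist $\gamma,\delta\in S$ such that $\gamma\,\mathcal{R}'\,\delta\,\mathcal{R}'\,\delta\beta=\gamma\alpha$ and $L'_\alpha\wedge L'_\beta=L'_{\gamma\alpha}$. \item[(M2)] For all $\alpha,\beta,\gamma,\delta\in S$, $L'_\alpha\wedge L'_\beta=L'_\gamma$ implies $L'_{\alpha\delta}\wedge L'_{\beta\delta}=L'_{\gamma\delta}$. \item[(M3)] For all $\alpha,\beta\in S$, $\alpha\beta\leq_l\beta$. \item[(M4)] $\mathcal{R}'\subseteq\mathcal{R}^*$. \item[(M5)] For all $\alpha,\beta,\gamma,\delta\in S$ with $\gamma\,\mathcal{R}'\,\gamma\alpha\,\mathcal{L}'\,\alpha$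 and $\delta\,\mathcal{R}'\,\delta\beta\,\mathcal{L}'\,\beta$, we have $\gamma\,\mathcal{L}'\,\delta$ if and only if $\alpha\,\mathcal{R}'\,\beta$. \item[(M6)] For all $\alpha,\beta,\gamma\in S$, $\alpha\,\mathcal{L}'\,\beta\,\mathcal{L}'\,\gamma\alpha=\gamma\beta$ implies $\alpha=\beta$. \end{itemize}
   Context: For an element $a$ of an inverse semigroup $Q$, $a^{-1}$ denotes its unique inverse. A subsemigroup $S$ of an inverse semigroup $Q$ is a left I-order in $Q$ (and $Q$ a semigroup of left I-quotients of $S$) if every $q\in Q$ can be written $q=a^{-1}b$ with $a,b\in S$; it is straight (and $Q$ a semigroup of straight left I-quotients) if moreover $a,b$ can always be chosen with $a\,\mathcal{R}\,b$ in $Q$. $\mathcal{R}^Q$, $\mathcal{L}^Q$ denote Green's relations of $Q$ and $\leq_{\mathcal{L}^Q}$ the preorder $a\leq_{\mathcal{L}^Q}b \iff Q^1a\subseteq Q^1b$. On $S$, $\mathcal{R}^*$ is the relation: $a\,\mathcal{R}^*\,b$ iff for all $x,y\in S^1$, $xa=ya \Leftrightarrow xb=yb$. A relation is left compatible if $a\,\rho\,b$ implies $ca\,\rho\,cb$ for all $c\in S$. *)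

theory Defs
  imports Main
begin

definition is_semigroup :: "'q set \<Rightarrow> ('q \<Rightarrow> 'q \<Rightarrow> 'q) \<Rightarrow> bool" where
  "is_semigroup Q m \<longleftrightarrow>
     (\<forall>a\<in>Q. \<forall>b\<in>Q. m a b \<in> Q) \<and>
     (\<forall>a\<in>Q. \<forall>b\<in>Q. \<forall>c\<in>Q. m (m a b) c = m a (m b c))"

definition is_inverse_in :: "'q set \<Rightarrow> ('q \<Rightarrow> 'q \<Rightarrow> 'q) \<Rightarrow> 'q \<Rightarrow> 'q \<Rightarrow> bool" where
  "is_inverse_in Q m a b \<longleftrightarrow> b \<in> Q \<and> m (m a b) a = a \<and> m (m b a) b = b"

definition inverse_semigroup :: "'q set \<Rightarrow> ('q \<Rightarrow> 'q \<Rightarrow> 'q) \<Rightarrow> bool" where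
  "inverse_semigroup Q m \<longleftrightarrow> is_semigroup Q m \<and> (\<forall>a\<in>Q. \<exists>!b. is_inverse_in Q m a b)"

definition inv_in :: "'q set \<Rightarrow> ('q \<Rightarrow> 'q \<Rightarrow> 'q) \<Rightarrow> 'q \<Rightarrow> 'q" where
  "inv_in Q m a = (THE b. is_inverse_in Q m a b)"

(* a \<le>_{R^Q} b  iff  a Q^1 \<subseteq> b Q^1 *)
definition leR_in :: "'q set \<Rightarrow> ('q \<Rightarrow> 'q \<Rightarrow> 'q) \<Rightarrow> 'q \<Rightarrow> 'q \<Rightarrow> bool" where
  "leR_in Q m a b \<longleftrightarrow> a = b \<or> (\<exists>x\<in>Q. a = m b x)"

(* a \<le>_{L^Q} b  iff  Q^1 a \<subseteq> Q^1 b *)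
definition leL_in :: "'q set \<Rightarrow> ('q \<Rightarrow> 'q \<Rightarrow> 'q) \<Rightarrow> 'q \<Rightarrow> 'q \<Rightarrow> bool" where
  "leL_in Q m a b \<longleftrightarrow> a = b \<or> (\<exists>x\<in>Q. a = m x b)"

definition greenR_in :: "'q set \<Rightarrow> ('q \<Rightarrow> 'q \<Rightarrow> 'q) \<Rightarrow> 'q \<Rightarrow> 'q \<Rightarrow> bool" where
  "greenR_in Q m a b \<longleftrightarrow> leR_in Q m a b \<and> leR_in Q m b a"

definition straight_left_I_order_embedding ::
  "('a::semigroup_mult \<Rightarrow> 'q) \<Rightarrow> 'q set \<Rightarrow> ('q \<Rightarrow> 'q \<Rightarrow> 'q) \<Rightarrow> bool" where
  "straight_left_I_order_embedding f Q m \<longleftrightarrow>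
     inverse_semigroup Q m \<and> inj f \<and> range f \<subseteq> Q \<and>
     (\<forall>a b. f (a * b) = m (f a) (f b)) \<and>
     (\<forall>q\<in>Q. \<exists>a b. q = m (inv_in Q m (f a)) (f b) \<and> greenR_in Q m (f a) (f b))"

(* multiplication by an element of S^1 = S \<union> {1}; None represents the adjoined identity *)
definition mult1 :: "'a option \<Rightarrow> 'a::semigroup_mult \<Rightarrow> 'a" where
  "mult1 x a = (case x of None \<Rightarrow> a | Some y \<Rightarrow> y * a)"

definition Rstar :: "'a::semigroup_mult \<Rightarrow> 'a \<Rightarrow> bool" where
  "Rstar a b \<longleftrightarrow> (\<forall>x y. mult1 x a = mult1 y a \<longleftrightarrow> mult1 x b = mult1 y b)"

definition left_compatible :: "('a::semigroup_mult \<Rightarrow> 'a \<Rightarrow> bool) \<Rightarrow> bool" where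
  "left_compatible r \<longleftrightarrow> (\<forall>a b c. r a b \<longrightarrow> r (c * a) (c * b))"

definition equivalence_rel :: "('a \<Rightarrow> 'a \<Rightarrow> bool) \<Rightarrow> bool" where
  "equivalence_rel r \<longleftrightarrow> (\<forall>a. r a a) \<and> (\<forall>a b. r a b \<longrightarrow> r b a) \<and>
                        (\<forall>a b c. r a b \<longrightarrow> r b c \<longrightarrow> r a c)"

definition preorder_rel :: "('a \<Rightarrow> 'a \<Rightarrow> bool) \<Rightarrow> bool" where
  "preorder_rel r \<longleftrightarrow> (\<forall>a. r a a) \<and> (\<forall>a b c. r a b \<longrightarrow> r b c \<longrightarrow> r a c)"

definition Lprime :: "('a \<Rightarrow> 'a \<Rightarrow> bool) \<Rightarrow> 'a \<Rightarrow> 'a \<Rightarrow> bool" where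
  "Lprime le a b \<longleftrightarrow> le a b \<and> le b a"

(* "L'_a \<and> L'_b = L'_c": the L'-class of c is the meet of the L'-classes of a and b in the
   poset S/L' ordered by L'_x \<le> L'_y iff x \<le>_l y (written out on representatives) *)
definition is_meet :: "('a \<Rightarrow> 'a \<Rightarrow> bool) \<Rightarrow> 'a \<Rightarrow> 'a \<Rightarrow> 'a \<Rightarrow> bool" where
  "is_meet le a b c \<longleftrightarrow> le c a \<and> le c b \<and> (\<forall>d. le d a \<longrightarrow> le d b \<longrightarrow> le d c)"

definition meet_semilattice_classes :: "('a \<Rightarrow> 'a \<Rightarrow> bool) \<Rightarrow> bool" where
  "meet_semilattice_classes le \<longleftrightarrow> (\<forall>a b. \<exists>c. is_meet le a b c)"

definition M1 :: "('a::semigroup_mult \<Rightarrow> 'a \<Rightarrow> bool) \<Rightarrow> ('a \<Rightarrow> 'a \<Rightarrow> bool) \<Rightarrow> bool" where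
  "M1 R le \<longleftrightarrow> (\<forall>\<alpha> \<beta>. \<exists>\<gamma> \<delta>. R \<gamma> \<delta> \<and> R \<delta> (\<delta> * \<beta>) \<and> \<delta> * \<beta> = \<gamma> * \<alpha> \<and>
                    is_meet le \<alpha> \<beta> (\<gamma> * \<alpha>))"

definition M2 :: "('a::semigroup_mult \<Rightarrow> 'a \<Rightarrow> bool) \<Rightarrow> bool" where
  "M2 le \<longleftrightarrow> (\<forall>\<alpha> \<beta> \<gamma> \<delta>. is_meet le \<alpha> \<beta> \<gamma> \<longrightarrow> is_meet le (\<alpha> * \<delta>) (\<beta> * \<delta>) (\<gamma> * \<delta>))"

definition M3 :: "('a::semigroup_mult \<Rightarrow> 'a \<Rightarrow> bool) \<Rightarrow> bool" where
  "M3 le \<longleftrightarrow> (\<forall>\<alpha> \<beta>. le (\<alpha> * \<beta>) \<beta>)"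

definition M4 :: "('a::semigroup_mult \<Rightarrow> 'a \<Rightarrow> bool) \<Rightarrow> bool" where
  "M4 R \<longleftrightarrow> (\<forall>a b. R a b \<longrightarrow> Rstar a b)"

definition M5 :: "('a::semigroup_mult \<Rightarrow> 'a \<Rightarrow> bool) \<Rightarrow> ('a \<Rightarrow> 'a \<Rightarrow> bool) \<Rightarrow> bool" where
  "M5 R le \<longleftrightarrow> (\<forall>\<alpha> \<beta> \<gamma> \<delta>.
      R \<gamma> (\<gamma> * \<alpha>) \<longrightarrow> Lprime le (\<gamma> * \<alpha>) \<alpha> \<longrightarrow>
      R \<delta> (\<delta> * \<beta>) \<longrightarrow> Lprime le (\<delta> * \<beta>) \<beta> \<longrightarrow>
      (Lprime le \<gamma> \<delta> \<longleftrightarrow> R \<alpha> \<beta>))"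

definition M6 :: "('a::semigroup_mult \<Rightarrow> 'a \<Rightarrow> bool) \<Rightarrow> bool" where
  "M6 le \<longleftrightarrow> (\<forall>\<alpha> \<beta> \<gamma>. Lprime le \<alpha> \<beta> \<longrightarrow> Lprime le \<beta> (\<gamma> * \<alpha>) \<longrightarrow> \<gamma> * \<alpha> = \<gamma> * \<beta> \<longrightarrow> \<alpha> = \<beta>)"

end

theory Submission
  imports Defs
begin


locale invsg =
  fixes Q :: "'q set" and m :: "'q \<Rightarrow> 'q \<Rightarrow> 'q" (infixl "\<cdot>" 70)
  assumes isg: "inverse_semigroup Q m"
begin

lemma closed[simp]: "a \<in> Q \<Longrightarrow> b \<in> Q \<Longrightarrow> a \<cdot> b \<in> Q"
  using isg unfolding inverse_semigroup_def is_semigroup_def by blast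

lemma assoc[simp]: "a \<in> Q \<Longrightarrow> b \<in> Q \<Longrightarrow> c \<in> Q \<Longrightarrow> a \<cdot> b \<cdot> c = a \<cdot> (b \<cdot> c)"
  using isg unfolding inverse_semigroup_def is_semigroup_def by blast

abbreviation iv :: "'q \<Rightarrow> 'q" where "iv x \<equiv> inv_in Q m x"
abbreviation E :: "'q \<Rightarrow> 'q" where "E x \<equiv> iv x \<cdot> x"

lemma ex_inv: "a \<in> Q \<Longrightarrow> is_inverse_in Q m a (iv a)"
proof -
  assume a: "a \<in> Q"
  then have "\<exists>!b. is_inverse_in Q m a b" using isg unfolding inverse_semigroup_def by blast
  then show ?thesis unfolding inv_in_def by (rule theI')
qed

lemma inv_uniq: "a \<in> Q \<Longrightarrow> is_inverse_in Q m a b \<Longrightarrow> b = iv a"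
proof -
  assume a: "a \<in> Q" and b: "is_inverse_in Q m a b"
  then have "\<exists>!b. is_inverse_in Q m a b" using isg unfolding inverse_semigroup_def by blast
  then show ?thesis using b ex_inv[OF a] by blast
qed

lemma iv_Q[simp]: "a \<in> Q \<Longrightarrow> iv a \<in> Q"
proof -
  assume "a \<in> Q"
  then have "is_inverse_in Q m a (iv a)" by (rule ex_inv)
  then show ?thesis unfolding is_inverse_in_def by (elim conjE)
qed

lemma iv1: "a \<in> Q \<Longrightarrow> a \<cdot> (iv a \<cdot> a) = a"
  using ex_inv[of a] unfolding is_inverse_in_def by simp
lemma iv2: "a \<in> Q \<Longrightarrow> iv a \<cdot> (a \<cdot> iv a) = iv a"
  using ex_inv[of a] unfolding is_inverse_in_def by simp

lemma iv1'[simp]: "a \<in> Q \<Longrightarrow> z \<in> Q \<Longrightarrow> a \<cdot> (iv a \<cdot> (a \<cdot> z)) = a \<cdot> z"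
proof -
  assume a: "a \<in> Q" "z \<in> Q"
  have "a \<cdot> (iv a \<cdot> (a \<cdot> z)) = (a \<cdot> (iv a \<cdot> a)) \<cdot> z" using a by simp
  also have "\<dots> = a \<cdot> z" by (simp only: iv1 a)
  finally show ?thesis .
qed
lemma iv2'[simp]: "a \<in> Q \<Longrightarrow> z \<in> Q \<Longrightarrow> iv a \<cdot> (a \<cdot> (iv a \<cdot> z)) = iv a \<cdot> z"
proof -
  assume a: "a \<in> Q" "z \<in> Q"
  have "iv a \<cdot> (a \<cdot> (iv a \<cdot> z)) = (iv a \<cdot> (a \<cdot> iv a)) \<cdot> z" using a by simp
  also have "\<dots> = iv a \<cdot> z" by (simp only: iv2 a)
  finally show ?thesis .
qed
lemmas iv1s[simp] = iv1 iv2

lemma inv_uniq2: "a \<in> Q \<Longrightarrow> b \<in> Q \<Longrightarrow> a \<cdot> (b \<cdot> a) = a \<Longrightarrow> b \<cdot> (a \<cdot> b) = b \<Longrightarrow> b = iv a"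
  by (rule inv_uniq) (auto simp: is_inverse_in_def)


lemma ext_eq: "a \<in> Q \<Longrightarrow> b \<in> Q \<Longrightarrow> w \<in> Q \<Longrightarrow> a \<cdot> b = c \<Longrightarrow> a \<cdot> (b \<cdot> w) = c \<cdot> w"
  by (metis assoc)

lemma idem_left: "e \<in> Q \<Longrightarrow> e \<cdot> e = e \<Longrightarrow> z \<in> Q \<Longrightarrow> e \<cdot> (e \<cdot> z) = e \<cdot> z"
proof -
  assume h: "e \<in> Q" "e \<cdot> e = e" "z \<in> Q"
  have "e \<cdot> (e \<cdot> z) = (e \<cdot> e) \<cdot> z" by (rule assoc[symmetric]) (use h in auto)
  then show ?thesis using h(2) by (simp only:)
qed

lemma gen_idem:
  assumes a: "a \<in> Q" "a \<cdot> a = a" and b: "b \<in> Q" "b \<cdot> b = b"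
  shows "a \<cdot> (b \<cdot> (a \<cdot> b)) = a \<cdot> b"
proof -
  note aa = idem_left[OF a] and bb = idem_left[OF b]
  obtain x where xd: "x = iv (a \<cdot> b)" by simp
  have xQ: "x \<in> Q" unfolding xd using a b by simp
  have "a \<cdot> (b \<cdot> (x \<cdot> (a \<cdot> b))) = (a \<cdot> b) \<cdot> (x \<cdot> (a \<cdot> b))" using a b xQ by simp
  also have "\<dots> = a \<cdot> b" unfolding xd by (rule iv1) (simp add: a b)
  finally have h1: "a \<cdot> (b \<cdot> (x \<cdot> (a \<cdot> b))) = a \<cdot> b" .
  have "x \<cdot> (a \<cdot> (b \<cdot> x)) = x \<cdot> ((a \<cdot> b) \<cdot> x)" using a b xQ by simp
  also have "\<dots> = x" unfolding xd by (rule iv2) (simp add: a b)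
  finally have h2: "x \<cdot> (a \<cdot> (b \<cdot> x)) = x" .
  have h2z: "x \<cdot> (a \<cdot> (b \<cdot> (x \<cdot> z))) = x \<cdot> z" if "z \<in> Q" for z
    using ext_eq[OF xQ _ that h2] a b xQ that by simp
  have c1: "a \<cdot> b \<cdot> (b \<cdot> (x \<cdot> a) \<cdot> (a \<cdot> b)) = a \<cdot> b"
    using a b xQ h1 by (simp add: bb aa)
  have c2: "b \<cdot> (x \<cdot> a) \<cdot> (a \<cdot> b \<cdot> (b \<cdot> (x \<cdot> a))) = b \<cdot> (x \<cdot> a)"
    using a b xQ h2z by (simp add: bb aa)
  have "b \<cdot> (x \<cdot> a) = iv (a \<cdot> b)"
    by (rule inv_uniq2[OF _ _ c1 c2]) (simp_all add: a b xQ)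
  then have bxa: "b \<cdot> (x \<cdot> a) = x" using xd by simp
  have "x \<cdot> x = b \<cdot> (x \<cdot> a) \<cdot> (b \<cdot> (x \<cdot> a))" using bxa by simp
  also have "\<dots> = b \<cdot> (x \<cdot> (a \<cdot> (b \<cdot> x)) \<cdot> a)" using a b xQ by simp
  also have "\<dots> = x" using h2 bxa by simp
  finally have xx: "x \<cdot> x = x" .
  have "a \<cdot> b = iv x" by (rule inv_uniq2) (use a b xQ h1 h2 in simp_all)
  moreover have "x = iv x" by (rule inv_uniq2) (use xQ xx in \<open>simp_all add: idem_left\<close>)
  ultimately have "a \<cdot> b \<cdot> (a \<cdot> b) = a \<cdot> b" using xx by simp
  then show ?thesis using a b by simp
qed

lemma idem_comm:
  assumes e: "e \<in> Q" "e \<cdot> e = e" and f: "f \<in> Q" "f \<cdot> f = f"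
  shows "e \<cdot> f = f \<cdot> e"
proof -
  have k1: "e \<cdot> (f \<cdot> (e \<cdot> f)) = e \<cdot> f" using gen_idem e f by blast
  have k2: "f \<cdot> (e \<cdot> (f \<cdot> e)) = f \<cdot> e" using gen_idem e f by blast
  have "f \<cdot> e = iv (e \<cdot> f)"
  proof (rule inv_uniq2)
    show "e \<cdot> f \<cdot> (f \<cdot> e \<cdot> (e \<cdot> f)) = e \<cdot> f" using e f k1 by (simp add: idem_left)
    show "f \<cdot> e \<cdot> (e \<cdot> f \<cdot> (f \<cdot> e)) = f \<cdot> e" using e f k2 by (simp add: idem_left)
  qed (simp_all add: e f)
  moreover have "e \<cdot> f = iv (e \<cdot> f)"
    by (rule inv_uniq2) (simp_all add: e f k1)
  ultimately show ?thesis by simp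
qed


definition idem :: "'q \<Rightarrow> bool" where "idem e \<longleftrightarrow> e \<in> Q \<and> e \<cdot> e = e"

lemma idem_comm': "idem e \<Longrightarrow> idem f \<Longrightarrow> e \<cdot> f = f \<cdot> e"
  unfolding idem_def using idem_comm by blast

lemma idem_comm2: "idem e \<Longrightarrow> idem f \<Longrightarrow> z \<in> Q \<Longrightarrow> e \<cdot> (f \<cdot> z) = f \<cdot> (e \<cdot> z)"
proof -
  assume h: "idem e" "idem f" "z \<in> Q"
  then have q: "e \<in> Q" "f \<in> Q" by (auto simp: idem_def)
  have "e \<cdot> (f \<cdot> z) = (e \<cdot> f) \<cdot> z" using q h by simp
  also have "\<dots> = (f \<cdot> e) \<cdot> z" using idem_comm'[OF h(1,2)] by (simp only:)
  also have "\<dots> = f \<cdot> (e \<cdot> z)" using q h by simp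
  finally show ?thesis .
qed

lemma idem_sq: "idem e \<Longrightarrow> e \<cdot> e = e" by (simp add: idem_def)
lemma idem_sq2: "idem e \<Longrightarrow> z \<in> Q \<Longrightarrow> e \<cdot> (e \<cdot> z) = e \<cdot> z"
  using idem_left by (auto simp: idem_def)
lemma idem_Q: "idem e \<Longrightarrow> e \<in> Q" by (simp add: idem_def)

lemma idem_E: "x \<in> Q \<Longrightarrow> idem (iv x \<cdot> x)"
  unfolding idem_def by simp
lemma idem_F: "x \<in> Q \<Longrightarrow> idem (x \<cdot> iv x)"
  unfolding idem_def by simp

lemma iv_iv[simp]: "x \<in> Q \<Longrightarrow> iv (iv x) = x"
  by (rule inv_uniq2[symmetric]) simp_all

lemma iv_prod: "x \<in> Q \<Longrightarrow> y \<in> Q \<Longrightarrow> iv (x \<cdot> y) = iv y \<cdot> iv x"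
proof (rule inv_uniq2[symmetric])
  assume q: "x \<in> Q" "y \<in> Q"
  show "x \<cdot> y \<in> Q" "iv y \<cdot> iv x \<in> Q" using q by simp_all
  have "x \<cdot> y \<cdot> (iv y \<cdot> iv x \<cdot> (x \<cdot> y)) = x \<cdot> ((y \<cdot> iv y) \<cdot> ((iv x \<cdot> x) \<cdot> y))" using q by simp
  also have "\<dots> = x \<cdot> ((iv x \<cdot> x) \<cdot> ((y \<cdot> iv y) \<cdot> y))"
    using idem_comm2[OF idem_F idem_E, of y x y] q by simp
  also have "\<dots> = x \<cdot> y" using q by simp
  finally show "x \<cdot> y \<cdot> (iv y \<cdot> iv x \<cdot> (x \<cdot> y)) = x \<cdot> y" .
  have "iv y \<cdot> iv x \<cdot> (x \<cdot> y \<cdot> (iv y \<cdot> iv x)) = iv y \<cdot> ((iv x \<cdot> x) \<cdot> ((y \<cdot> iv y) \<cdot> iv x))" using q by simp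
  also have "\<dots> = iv y \<cdot> ((y \<cdot> iv y) \<cdot> ((iv x \<cdot> x) \<cdot> iv x))"
    using idem_comm2[OF idem_E idem_F, of x y "iv x"] q by simp
  also have "\<dots> = iv y \<cdot> iv x" using q by simp
  finally show "iv y \<cdot> iv x \<cdot> (x \<cdot> y \<cdot> (iv y \<cdot> iv x)) = iv y \<cdot> iv x" .
qed

lemma leL_char: "x \<in> Q \<Longrightarrow> y \<in> Q \<Longrightarrow> leL_in Q m x y \<longleftrightarrow> x = x \<cdot> (iv y \<cdot> y)"
proof
  assume q: "x \<in> Q" "y \<in> Q"
  assume "leL_in Q m x y"
  then consider "x = y" | z where "z \<in> Q" "x = z \<cdot> y" unfolding leL_in_def by blast
  then show "x = x \<cdot> (iv y \<cdot> y)"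
  proof cases
    case 1 then show ?thesis using q by simp
  next
    case (2 z) then show ?thesis using q by simp
  qed
next
  assume q: "x \<in> Q" "y \<in> Q" and h: "x = x \<cdot> (iv y \<cdot> y)"
  have "(x \<cdot> iv y) \<cdot> y = x \<cdot> (iv y \<cdot> y)" using q by simp
  then have "x = (x \<cdot> iv y) \<cdot> y" using trans[OF h sym] by blast
  then show "leL_in Q m x y" unfolding leL_in_def using q by (intro disjI2 bexI[of _ "x \<cdot> iv y"]) auto
qed

lemma leR_char: "x \<in> Q \<Longrightarrow> y \<in> Q \<Longrightarrow> leR_in Q m x y \<longleftrightarrow> x = y \<cdot> (iv y \<cdot> x)"
proof
  assume q: "x \<in> Q" "y \<in> Q"
  assume "leR_in Q m x y"
  then consider "x = y" | z where "z \<in> Q" "x = y \<cdot> z" unfolding leR_in_def by blast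
  then show "x = y \<cdot> (iv y \<cdot> x)"
  proof cases
    case 1 then show ?thesis using q by simp
  next
    case (2 z) then show ?thesis using q by simp
  qed
next
  assume q: "x \<in> Q" "y \<in> Q" and h: "x = y \<cdot> (iv y \<cdot> x)"
  then show "leR_in Q m x y" unfolding leR_in_def using q by (metis closed iv_Q)
qed

lemma greenR_char: "x \<in> Q \<Longrightarrow> y \<in> Q \<Longrightarrow> greenR_in Q m x y \<longleftrightarrow> x \<cdot> iv x = y \<cdot> iv y"
proof
  assume q: "x \<in> Q" "y \<in> Q"
  assume "greenR_in Q m x y"
  then have h1: "x = y \<cdot> (iv y \<cdot> x)" and h2: "y = x \<cdot> (iv x \<cdot> y)"
    unfolding greenR_in_def using leR_char q by blast+
  have "x \<cdot> iv x = (y \<cdot> iv y) \<cdot> (x \<cdot> iv x)" 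
  proof -
    have "x \<cdot> iv x = (y \<cdot> (iv y \<cdot> x)) \<cdot> iv x" using h1 by (rule arg_cong)
    also have "\<dots> = (y \<cdot> iv y) \<cdot> (x \<cdot> iv x)" using q by simp
    finally show ?thesis .
  qed
  also have "\<dots> = (x \<cdot> iv x) \<cdot> (y \<cdot> iv y)" using idem_comm'[OF idem_F idem_F] q by blast
  also have "\<dots> = y \<cdot> iv y"
  proof -
    have "y \<cdot> iv y = (x \<cdot> (iv x \<cdot> y)) \<cdot> iv y" using h2 by (rule arg_cong)
    also have "\<dots> = (x \<cdot> iv x) \<cdot> (y \<cdot> iv y)" using q by simp
    finally show ?thesis by simp
  qed
  finally show "x \<cdot> iv x = y \<cdot> iv y" .
next
  assume q: "x \<in> Q" "y \<in> Q" and h: "x \<cdot> iv x = y \<cdot> iv y"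
  have "x = (x \<cdot> iv x) \<cdot> x" using q by simp
  also have "\<dots> = (y \<cdot> iv y) \<cdot> x" using h by simp
  finally have 1: "x = y \<cdot> (iv y \<cdot> x)" using q by simp
  have "y = (y \<cdot> iv y) \<cdot> y" using q by simp
  also have "\<dots> = (x \<cdot> iv x) \<cdot> y" using h by simp
  finally have 2: "y = x \<cdot> (iv x \<cdot> y)" using q by simp
  show "greenR_in Q m x y" unfolding greenR_in_def using leR_char q 1 2 by blast
qed


lemma idem_mult: "idem e \<Longrightarrow> idem g \<Longrightarrow> idem (e \<cdot> g)"
proof -
  assume h: "idem e" "idem g"
  have q: "e \<in> Q" "g \<in> Q" using h by (auto simp: idem_def)
  have "e \<cdot> g \<cdot> (e \<cdot> g) = e \<cdot> (g \<cdot> (e \<cdot> g))" using q by simp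
  also have "\<dots> = e \<cdot> (e \<cdot> (g \<cdot> g))" using idem_comm2[OF h(2) h(1) q(2)] by simp
  also have "\<dots> = e \<cdot> g" using h q by (simp add: idem_sq idem_sq2)
  finally show ?thesis using q by (simp add: idem_def)
qed

lemma iv_idem: "idem e \<Longrightarrow> iv e = e"
  by (rule inv_uniq2[symmetric]) (auto simp: idem_def idem_sq2)

lemma leL_E: "x \<in> Q \<Longrightarrow> y \<in> Q \<Longrightarrow> leL_in Q m x y \<longleftrightarrow> iv x \<cdot> x = (iv x \<cdot> x) \<cdot> (iv y \<cdot> y)"
proof -
  assume q: "x \<in> Q" "y \<in> Q"
  have "x = x \<cdot> (iv y \<cdot> y) \<longleftrightarrow> iv x \<cdot> x = (iv x \<cdot> x) \<cdot> (iv y \<cdot> y)"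
  proof
    assume h: "x = x \<cdot> (iv y \<cdot> y)"
    have "iv x \<cdot> x = iv x \<cdot> (x \<cdot> (iv y \<cdot> y))" using h by (rule arg_cong)
    then show "iv x \<cdot> x = (iv x \<cdot> x) \<cdot> (iv y \<cdot> y)" using q by simp
  next
    assume h: "iv x \<cdot> x = (iv x \<cdot> x) \<cdot> (iv y \<cdot> y)"
    have "x = x \<cdot> (iv x \<cdot> x)" using q by simp
    also have "\<dots> = x \<cdot> ((iv x \<cdot> x) \<cdot> (iv y \<cdot> y))" using h by (rule arg_cong)
    also have "\<dots> = x \<cdot> (iv y \<cdot> y)" using q by simp
    finally show "x = x \<cdot> (iv y \<cdot> y)" .
  qed
  then show ?thesis using leL_char q by simp
qed

lemma E_prod: "x \<in> Q \<Longrightarrow> y \<in> Q \<Longrightarrow> iv (x \<cdot> y) \<cdot> (x \<cdot> y) = iv y \<cdot> ((iv x \<cdot> x) \<cdot> y)"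
  by (simp add: iv_prod)

lemma idem_antisym: "idem e \<Longrightarrow> idem g \<Longrightarrow> e = e \<cdot> g \<Longrightarrow> g = g \<cdot> e \<Longrightarrow> e = g"
  using idem_comm' by metis


lemma eq_ext: "a \<in> Q \<Longrightarrow> b \<in> Q \<Longrightarrow> c \<in> Q \<Longrightarrow> d \<in> Q \<Longrightarrow> z \<in> Q \<Longrightarrow> a \<cdot> b = c \<cdot> d \<Longrightarrow> a \<cdot> (b \<cdot> z) = c \<cdot> (d \<cdot> z)"
  by (metis assoc)

lemma absorb_left: "x \<in> Q \<Longrightarrow> c \<in> Q \<Longrightarrow> x = x \<cdot> E (c \<cdot> x) \<Longrightarrow> x = E c \<cdot> x"
proof -
  assume q: "x \<in> Q" "c \<in> Q" and h: "x = x \<cdot> E (c \<cdot> x)"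
  have "x \<cdot> E (c \<cdot> x) = x \<cdot> (iv x \<cdot> (iv c \<cdot> (c \<cdot> x)))" using q by (simp add: iv_prod)
  also have "\<dots> = iv c \<cdot> (c \<cdot> x)" using idem_comm2[OF idem_F idem_E, of x c x] q by simp
  finally show ?thesis using h q by simp
qed

lemma E_eq_F: "g \<in> Q \<Longrightarrow> a \<in> Q \<Longrightarrow> g \<cdot> iv g = (g \<cdot> a) \<cdot> iv (g \<cdot> a) \<Longrightarrow> a = a \<cdot> E (g \<cdot> a) \<Longrightarrow> E g = a \<cdot> iv a"
proof -
  assume q: "g \<in> Q" "a \<in> Q" and h1: "g \<cdot> iv g = (g \<cdot> a) \<cdot> iv (g \<cdot> a)" and h2: "a = a \<cdot> E (g \<cdot> a)"
  have a1: "a = E g \<cdot> a" using absorb_left[OF q(2,1) h2] .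
  have a2: "a \<cdot> iv a = E g \<cdot> (a \<cdot> iv a)"
  proof -
    have "a \<cdot> iv a = (E g \<cdot> a) \<cdot> iv a" using a1 by (rule arg_cong)
    then show ?thesis using q by simp
  qed
  have "E g = iv g \<cdot> (g \<cdot> iv g) \<cdot> g" using q by simp
  also have "\<dots> = iv g \<cdot> ((g \<cdot> a) \<cdot> iv (g \<cdot> a)) \<cdot> g" using h1 by simp
  also have "\<dots> = E g \<cdot> ((a \<cdot> iv a) \<cdot> E g)" using q by (simp add: iv_prod)
  also have "\<dots> = E g \<cdot> (E g \<cdot> (a \<cdot> iv a))" using idem_comm'[OF idem_F idem_E, of a g] q by simp
  also have "\<dots> = E g \<cdot> (a \<cdot> iv a)" using idem_sq2[OF idem_E, of g] q by simp
  also have "\<dots> = a \<cdot> iv a" using a2 by simp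
  finally show ?thesis .
qed

lemma E_eq_iff: "x \<in> Q \<Longrightarrow> y \<in> Q \<Longrightarrow> (E x = E x \<cdot> E y \<and> E y = E y \<cdot> E x) \<longleftrightarrow> E x = E y"
proof
  assume q: "x \<in> Q" "y \<in> Q"
  assume "E x = E x \<cdot> E y \<and> E y = E y \<cdot> E x"
  then show "E x = E y" using idem_antisym[OF idem_E idem_E] q by blast
next
  assume q: "x \<in> Q" "y \<in> Q" and h: "E x = E y"
  show "E x = E x \<cdot> E y \<and> E y = E y \<cdot> E x" using h idem_sq[OF idem_E, of y] q by simp
qed


lemma meet_gen:
  assumes e1: "idem e1" and e2: "idem e2" and ec: "ec = e1 \<cdot> e2"
  shows "ec = ec \<cdot> e1" "ec = ec \<cdot> e2" "idem e \<Longrightarrow> e = e \<cdot> e1 \<Longrightarrow> e = e \<cdot> e2 \<Longrightarrow> e = e \<cdot> ec"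
proof -
  have q: "e1 \<in> Q" "e2 \<in> Q" using e1 e2 by (auto simp: idem_def)
  have "e1 \<cdot> e2 \<cdot> e1 = e1 \<cdot> (e2 \<cdot> e1)" using q by simp
  also have "\<dots> = e1 \<cdot> (e1 \<cdot> e2)" using idem_comm'[OF e1 e2] by simp
  also have "\<dots> = e1 \<cdot> e2" using idem_sq2[OF e1 q(2)] .
  finally show "ec = ec \<cdot> e1" using ec by simp
  have "e1 \<cdot> e2 \<cdot> e2 = e1 \<cdot> e2" using q idem_sq[OF e2] by simp
  then show "ec = ec \<cdot> e2" using ec by simp
  assume e: "idem e" "e = e \<cdot> e1" "e = e \<cdot> e2"
  have "e \<cdot> ec = (e \<cdot> e1) \<cdot> e2" using ec q e(1) by (simp add: idem_def)
  also have "\<dots> = e \<cdot> e2" by (simp only: e(2)[symmetric])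
  also have "\<dots> = e" by (simp only: e(3)[symmetric])
  finally show "e = e \<cdot> ec" by simp
qed

end

locale emb = invsg Q m for Q :: "'q set" and m (infixl "\<cdot>" 70) +
  fixes f :: "'s::semigroup_mult \<Rightarrow> 'q"
  assumes fQ[simp]: "f a \<in> Q" and hom: "f (a * b) = f a \<cdot> f b" and finj: "inj f"
  and straight: "q \<in> Q \<Longrightarrow> \<exists>a b. q = iv (f a) \<cdot> f b \<and> greenR_in Q m (f a) (f b)"
begin

definition RR :: "'s \<Rightarrow> 's \<Rightarrow> bool" where "RR a b \<longleftrightarrow> greenR_in Q m (f a) (f b)"
definition LE :: "'s \<Rightarrow> 's \<Rightarrow> bool" where "LE a b \<longleftrightarrow> leL_in Q m (f a) (f b)"

lemma RR_F: "RR a b \<longleftrightarrow> f a \<cdot> iv (f a) = f b \<cdot> iv (f b)"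
  unfolding RR_def by (simp add: greenR_char)

lemma LE_E: "LE a b \<longleftrightarrow> E (f a) = E (f a) \<cdot> E (f b)"
  unfolding LE_def by (simp add: leL_E)


lemma RR_equiv: "equivalence_rel RR"
  unfolding equivalence_rel_def RR_F by auto

lemma LE_pre: "preorder_rel LE"
  unfolding preorder_rel_def LE_def leL_in_def
  by (metis closed fQ assoc)

lemma RR_lc: "left_compatible RR"
  unfolding left_compatible_def
proof (intro allI impI)
  fix a b c assume h: "RR a b"
  then have "f a \<cdot> iv (f a) = f b \<cdot> iv (f b)" by (simp add: RR_F)
  then have "f a \<cdot> (iv (f a) \<cdot> iv (f c)) = f b \<cdot> (iv (f b) \<cdot> iv (f c))"
    by (intro eq_ext) simp_all
  then show "RR (c * a) (c * b)" unfolding RR_F by (simp add: hom iv_prod)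
qed

lemma M3_ok: "M3 LE"
  unfolding M3_def LE_def leL_in_def hom by auto

lemma f_mult1: "f (mult1 x a) = (case x of None \<Rightarrow> f a | Some u \<Rightarrow> f u \<cdot> f a)"
  by (cases x) (simp_all add: mult1_def hom)

lemma Rstar_half: "leR_in Q m (f b) (f a) \<Longrightarrow> mult1 x a = mult1 y a \<Longrightarrow> mult1 x b = mult1 y b"
proof -
  assume h: "leR_in Q m (f b) (f a)" and e: "mult1 x a = mult1 y a"
  have fe: "f (mult1 x a) = f (mult1 y a)" using e by simp
  from h consider "f b = f a" | z where "z \<in> Q" "f b = f a \<cdot> z" unfolding leR_in_def by blast
  then have "f (mult1 x b) = f (mult1 y b)"
  proof cases
    case 1 then have "b = a" using finj by (simp add: inj_eq)
    then show ?thesis using fe by simp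
  next
    case (2 z)
    have "f (mult1 x b) = f (mult1 x a) \<cdot> z" for x using 2 by (cases x) (simp_all add: f_mult1)
    then show ?thesis using fe by metis
  qed
  then show ?thesis using finj by (simp add: inj_eq)
qed

lemma M4_ok: "M4 RR"
  unfolding M4_def Rstar_def RR_def greenR_in_def using Rstar_half by metis

lemma M6_ok: "M6 LE"
  unfolding M6_def
proof (intro allI impI)
  fix \<alpha> \<beta> \<gamma> assume h1: "Lprime LE \<alpha> \<beta>" and h2: "Lprime LE \<beta> (\<gamma> * \<alpha>)" and h3: "\<gamma> * \<alpha> = \<gamma> * \<beta>"
  have t: "LE \<alpha> (\<gamma> * \<alpha>)" using h1 h2 LE_pre unfolding Lprime_def preorder_rel_def by blast
  have t2: "LE \<beta> (\<gamma> * \<beta>)" using h2 h3 unfolding Lprime_def by simp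
  have a: "f \<alpha> = E (f \<gamma>) \<cdot> f \<alpha>"
    by (rule absorb_left) (use t in \<open>simp_all add: LE_def leL_char hom\<close>)
  have b: "f \<beta> = E (f \<gamma>) \<cdot> f \<beta>"
    by (rule absorb_left) (use t2 in \<open>simp_all add: LE_def leL_char hom\<close>)
  have "f \<alpha> = iv (f \<gamma>) \<cdot> f (\<gamma> * \<alpha>)" using a by (simp add: hom)
  also have "\<dots> = iv (f \<gamma>) \<cdot> f (\<gamma> * \<beta>)" using h3 by simp
  also have "\<dots> = f \<beta>" using b by (simp add: hom)
  finally show "\<alpha> = \<beta>" using finj by (simp add: inj_eq)
qed

lemma Lprime_E: "Lprime LE a b \<longleftrightarrow> E (f a) = E (f b)"
  unfolding Lprime_def LE_E using E_eq_iff by simp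

lemma M5_ok: "M5 RR LE"
  unfolding M5_def
proof (intro allI impI)
  fix \<alpha> \<beta> \<gamma> \<delta>
  assume h1: "RR \<gamma> (\<gamma> * \<alpha>)" "Lprime LE (\<gamma> * \<alpha>) \<alpha>" and h2: "RR \<delta> (\<delta> * \<beta>)" "Lprime LE (\<delta> * \<beta>) \<beta>"
  have g: "E (f \<gamma>) = f \<alpha> \<cdot> iv (f \<alpha>)"
    by (rule E_eq_F) (use h1 in \<open>simp_all add: RR_F Lprime_def LE_def leL_char hom\<close>)
  have d: "E (f \<delta>) = f \<beta> \<cdot> iv (f \<beta>)"
    by (rule E_eq_F) (use h2 in \<open>simp_all add: RR_F Lprime_def LE_def leL_char hom\<close>)
  show "Lprime LE \<gamma> \<delta> \<longleftrightarrow> RR \<alpha> \<beta>" unfolding Lprime_E RR_F g d ..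
qed


lemma M1_wit: "\<exists>\<gamma> \<delta>. RR \<gamma> \<delta> \<and> RR \<delta> (\<delta> * \<beta>) \<and> \<delta> * \<beta> = \<gamma> * \<alpha> \<and> E (f (\<gamma> * \<alpha>)) = E (f \<alpha>) \<cdot> E (f \<beta>)"
proof -
  define a where "a = f \<alpha>"
  define b where "b = f \<beta>"
  have aQ[simp]: "a \<in> Q" and bQ[simp]: "b \<in> Q" by (simp_all add: a_def b_def)
  define q where "q = a \<cdot> iv b"
  have qQ: "q \<in> Q" by (simp add: q_def)
  obtain \<gamma> \<delta> where qd: "q = iv (f \<gamma>) \<cdot> f \<delta>" and gr: "greenR_in Q m (f \<gamma>) (f \<delta>)"
    using straight[OF qQ] by blast
  define g where "g = f \<gamma>"
  define d where "d = f \<delta>"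
  have gQ[simp]: "g \<in> Q" and dQ[simp]: "d \<in> Q" by (simp_all add: g_def d_def)
  have Fgd: "g \<cdot> iv g = d \<cdot> iv d" using gr by (simp add: greenR_char g_def d_def)
  have Fgdz: "g \<cdot> (iv g \<cdot> z) = d \<cdot> (iv d \<cdot> z)" if "z \<in> Q" for z
    using eq_ext[OF gQ iv_Q[OF gQ] dQ iv_Q[OF dQ] that Fgd] by simp
  have q1: "q = iv g \<cdot> d" using qd by (simp add: g_def d_def)
  have EQ1: "E g = a \<cdot> (iv b \<cdot> (b \<cdot> iv a))"
  proof -
    have "a \<cdot> (iv b \<cdot> (b \<cdot> iv a)) = q \<cdot> iv q" by (simp add: q_def iv_prod)
    also have "\<dots> = iv g \<cdot> (d \<cdot> (iv d \<cdot> g))" by (simp add: q1 iv_prod)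
    also have "\<dots> = iv g \<cdot> g" using Fgdz[of g] by simp
    finally show ?thesis by simp
  qed
  have EQ2: "E d = b \<cdot> (iv a \<cdot> (a \<cdot> iv b))"
  proof -
    have "b \<cdot> (iv a \<cdot> (a \<cdot> iv b)) = iv q \<cdot> q" by (simp add: q_def iv_prod)
    also have "\<dots> = iv d \<cdot> (g \<cdot> (iv g \<cdot> d))" by (simp add: q1 iv_prod)
    also have "\<dots> = iv d \<cdot> d" using Fgdz[of d] by simp
    finally show ?thesis by simp
  qed
  have EQ1z: "iv g \<cdot> (g \<cdot> z) = a \<cdot> (iv b \<cdot> (b \<cdot> (iv a \<cdot> z)))" if "z \<in> Q" for z
    using arg_cong[OF EQ1, of "\<lambda>t. t \<cdot> z"] that by simp
  have EQ2z: "iv d \<cdot> (d \<cdot> z) = b \<cdot> (iv a \<cdot> (a \<cdot> (iv b \<cdot> z)))" if "z \<in> Q" for z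
    using arg_cong[OF EQ2, of "\<lambda>t. t \<cdot> z"] that by simp
  have cab: "iv b \<cdot> (b \<cdot> (iv a \<cdot> (a \<cdot> z))) = iv a \<cdot> (a \<cdot> (iv b \<cdot> (b \<cdot> z)))" if "z \<in> Q" for z
    using idem_comm2[OF idem_E idem_E, of b a z] that by simp
  have cab0: "iv b \<cdot> (b \<cdot> (iv a \<cdot> a)) = iv a \<cdot> (a \<cdot> (iv b \<cdot> b))"
    using idem_comm'[OF idem_E idem_E, of b a] by simp
  have s1: "iv g \<cdot> (g \<cdot> a) = a \<cdot> (iv b \<cdot> b)"
    using EQ1z[of a] cab0 by simp
  have s2: "iv g \<cdot> (d \<cdot> b) = a \<cdot> (iv b \<cdot> b)"
  proof -
    have "iv g \<cdot> (d \<cdot> b) = q \<cdot> b" by (simp add: q1)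
    also have "\<dots> = a \<cdot> (iv b \<cdot> b)" by (simp add: q_def)
    finally show ?thesis .
  qed
  have ga: "g \<cdot> a = d \<cdot> b"
  proof -
    have "g \<cdot> a = g \<cdot> (iv g \<cdot> (g \<cdot> a))" by simp
    also have "\<dots> = g \<cdot> (iv g \<cdot> (d \<cdot> b))" using s1 s2 by simp
    also have "\<dots> = d \<cdot> b" using Fgdz[of "d \<cdot> b"] by simp
    finally show ?thesis .
  qed
  have e1: "\<delta> * \<beta> = \<gamma> * \<alpha>" using ga finj by (simp add: g_def d_def a_def b_def hom[symmetric] inj_eq)
  have e2: "E (f (\<gamma> * \<alpha>)) = E (f \<alpha>) \<cdot> E (f \<beta>)"
  proof -
    have "E (f (\<gamma> * \<alpha>)) = iv a \<cdot> (iv g \<cdot> (g \<cdot> a))" by (simp add: hom iv_prod g_def a_def)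
    also have "\<dots> = iv a \<cdot> (a \<cdot> (iv b \<cdot> b))" using s1 by simp
    finally show ?thesis by (simp add: a_def b_def)
  qed
  have e3: "RR \<gamma> \<delta>" using gr by (simp add: RR_def)
  have dd: "d = d \<cdot> (b \<cdot> iv b)"
  proof -
    have "d = d \<cdot> (iv d \<cdot> d)" by simp
    also have "\<dots> = d \<cdot> (b \<cdot> (iv a \<cdot> (a \<cdot> iv b)))" using EQ2 by simp
    also have "\<dots> = d \<cdot> (b \<cdot> (iv a \<cdot> (a \<cdot> (iv b \<cdot> (b \<cdot> iv b)))))" by simp
    also have "\<dots> = d \<cdot> (iv d \<cdot> (d \<cdot> (b \<cdot> iv b)))" using EQ2z[of "b \<cdot> iv b"] by simp
    also have "\<dots> = d \<cdot> (b \<cdot> iv b)" by simp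
    finally show ?thesis .
  qed
  have e4: "RR \<delta> (\<delta> * \<beta>)"
  proof -
    have "f (\<delta> * \<beta>) \<cdot> iv (f (\<delta> * \<beta>)) = d \<cdot> (b \<cdot> iv b) \<cdot> iv d" by (simp add: hom iv_prod d_def b_def)
    also have "\<dots> = d \<cdot> iv d" using dd[symmetric] by simp
    finally show ?thesis by (simp add: RR_F d_def)
  qed
  show ?thesis using e1 e2 e3 e4 by blast
qed


lemma meet_from_E: "E (f c) = E (f a) \<cdot> E (f b) \<Longrightarrow> is_meet LE a b c"
proof -
  assume h: "E (f c) = E (f a) \<cdot> E (f b)"
  note mg = meet_gen[OF idem_E[OF fQ] idem_E[OF fQ] h]
  show ?thesis unfolding is_meet_def LE_E
    using mg(1,2) mg(3)[OF idem_E[OF fQ]] by blast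
qed

lemma meet_E: "is_meet LE a b c \<Longrightarrow> E (f c) = E (f a) \<cdot> E (f b)"
proof -
  assume h: "is_meet LE a b c"
  obtain \<gamma> \<delta> where w: "E (f (\<gamma> * a)) = E (f a) \<cdot> E (f b)" using M1_wit by blast
  have m: "is_meet LE a b (\<gamma> * a)" using meet_from_E[OF w] .
  have "Lprime LE c (\<gamma> * a)" using h m unfolding is_meet_def Lprime_def by blast
  then show ?thesis using w by (simp add: Lprime_E)
qed

lemma M1_ok: "M1 RR LE"
  unfolding M1_def using M1_wit meet_from_E by blast

lemma meet_ok: "meet_semilattice_classes LE"
  unfolding meet_semilattice_classes_def using M1_wit meet_from_E by blast

lemma M2_ok: "M2 LE"
  unfolding M2_def
proof (intro allI impI)
  fix \<alpha> \<beta> \<gamma> \<delta> assume "is_meet LE \<alpha> \<beta> \<gamma>"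
  then have hc: "E (f \<gamma>) = E (f \<alpha>) \<cdot> E (f \<beta>)" by (rule meet_E)
  define a where "a = f \<alpha>"
  define b where "b = f \<beta>"
  define c where "c = f \<gamma>"
  define d where "d = f \<delta>"
  have q[simp]: "a \<in> Q" "b \<in> Q" "c \<in> Q" "d \<in> Q" by (simp_all add: a_def b_def c_def d_def)
  have hcz: "iv c \<cdot> (c \<cdot> z) = iv a \<cdot> (a \<cdot> (iv b \<cdot> (b \<cdot> z)))" if "z \<in> Q" for z
    using arg_cong[OF hc, of "\<lambda>t. t \<cdot> z"] that by (simp add: a_def b_def c_def)
  have cm: "d \<cdot> (iv d \<cdot> (iv b \<cdot> (b \<cdot> d))) = iv b \<cdot> (b \<cdot> d)"
    using idem_comm2[OF idem_F idem_E, of d b d] by simp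
  have "E (f (\<gamma> * \<delta>)) = E (f (\<alpha> * \<delta>)) \<cdot> E (f (\<beta> * \<delta>))"
  proof -
    have "E (f (\<alpha> * \<delta>)) \<cdot> E (f (\<beta> * \<delta>)) = iv d \<cdot> (iv a \<cdot> (a \<cdot> (d \<cdot> (iv d \<cdot> (iv b \<cdot> (b \<cdot> d))))))"
      by (simp add: hom iv_prod a_def b_def d_def)
    also have "\<dots> = iv d \<cdot> (iv a \<cdot> (a \<cdot> (iv b \<cdot> (b \<cdot> d))))" using cm by simp
    also have "\<dots> = iv d \<cdot> (iv c \<cdot> (c \<cdot> d))" using hcz[of d] by simp
    also have "\<dots> = E (f (\<gamma> * \<delta>))" by (simp add: hom iv_prod c_def d_def)
    finally show ?thesis by simp
  qed
  then show "is_meet LE (\<alpha> * \<delta>) (\<beta> * \<delta>) (\<gamma> * \<delta>)" by (rule meet_from_E)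
qed

theorem forward: "equivalence_rel RR \<and> left_compatible RR \<and> preorder_rel LE \<and> meet_semilattice_classes LE \<and>
   M1 RR LE \<and> M2 LE \<and> M3 LE \<and> M4 RR \<and> M5 RR LE \<and> M6 LE"
  using RR_equiv RR_lc LE_pre meet_ok M1_ok M2_ok M3_ok M4_ok M5_ok M6_ok by blast

end


locale Mx =
  fixes R :: "'a::semigroup_mult \<Rightarrow> 'a \<Rightarrow> bool" and le :: "'a \<Rightarrow> 'a \<Rightarrow> bool"
  assumes eqR: "equivalence_rel R" and lcR: "left_compatible R" and pre: "preorder_rel le"
    and m1: "M1 R le" and m2: "M2 le" and m3: "M3 le" and m4: "M4 R" and m5: "M5 R le" and m6: "M6 le"
begin

abbreviation L where "L \<equiv> Lprime le"

lemma R_refl[simp]: "R a a" using eqR unfolding equivalence_rel_def by blast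
lemma R_sym: "R a b \<Longrightarrow> R b a" using eqR unfolding equivalence_rel_def by blast
lemma R_trans: "R a b \<Longrightarrow> R b c \<Longrightarrow> R a c" using eqR unfolding equivalence_rel_def by blast
lemma R_lc: "R a b \<Longrightarrow> R (c * a) (c * b)" using lcR unfolding left_compatible_def by blast
lemma le_refl[simp]: "le a a" using pre unfolding preorder_rel_def by blast
lemma le_trans: "le a b \<Longrightarrow> le b c \<Longrightarrow> le a c" using pre unfolding preorder_rel_def by blast
lemma L_refl[simp]: "L a a" by (simp add: Lprime_def)
lemma L_sym: "L a b \<Longrightarrow> L b a" by (simp add: Lprime_def)
lemma L_trans: "L a b \<Longrightarrow> L b c \<Longrightarrow> L a c" unfolding Lprime_def using le_trans by blast
lemma L_le1: "L a b \<Longrightarrow> le a b" by (simp add: Lprime_def)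
lemma L_le2: "L a b \<Longrightarrow> le b a" by (simp add: Lprime_def)
lemma M3': "le (a * b) b" using m3 unfolding M3_def by blast
lemma Rs: "R a b \<Longrightarrow> x * a = y * a \<Longrightarrow> x * b = y * b"
  using m4 unfolding M4_def Rstar_def mult1_def by (metis option.simps(5))
lemma M1': "\<exists>\<gamma> \<delta>. R \<gamma> \<delta> \<and> R \<delta> (\<delta> * \<beta>) \<and> \<delta> * \<beta> = \<gamma> * \<alpha> \<and> is_meet le \<alpha> \<beta> (\<gamma> * \<alpha>)"
  using m1 unfolding M1_def by blast
lemma M2': "is_meet le a b c \<Longrightarrow> is_meet le (a * d) (b * d) (c * d)"
  using m2 unfolding M2_def by blast
lemma M5': "R g (g * a) \<Longrightarrow> L (g * a) a \<Longrightarrow> R h (h * b) \<Longrightarrow> L (h * b) b \<Longrightarrow> (L g h \<longleftrightarrow> R a b)"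
  using m5 unfolding M5_def by blast
lemma cancel: "L (p * s) s \<Longrightarrow> L (p * t) t \<Longrightarrow> p * s = p * t \<Longrightarrow> s = t"
  using m6 unfolding M6_def by (metis L_sym L_trans)

lemma meet_lower1: "is_meet le a b c \<Longrightarrow> le c a" by (simp add: is_meet_def)
lemma meet_lower2: "is_meet le a b c \<Longrightarrow> le c b" by (simp add: is_meet_def)
lemma meet_greatest: "is_meet le a b c \<Longrightarrow> le d a \<Longrightarrow> le d b \<Longrightarrow> le d c" by (simp add: is_meet_def)
lemma meet_sym: "is_meet le a b c \<Longrightarrow> is_meet le b a c" by (auto simp: is_meet_def)
lemma meet_uniq: "is_meet le a b c \<Longrightarrow> is_meet le a b c' \<Longrightarrow> L c c'"
  by (simp add: is_meet_def Lprime_def)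
lemma meet_leI: "le a b \<Longrightarrow> is_meet le a b a" by (simp add: is_meet_def)
lemma meet_LI: "L a b \<Longrightarrow> is_meet le a b a" by (simp add: is_meet_def Lprime_def)
lemma meet_congL: "is_meet le a b c \<Longrightarrow> L a a' \<Longrightarrow> L b b' \<Longrightarrow> L c c' \<Longrightarrow> is_meet le a' b' c'"
  unfolding is_meet_def Lprime_def by (meson le_trans)
lemma meet_L_imp: "is_meet le a b c \<Longrightarrow> L a b \<Longrightarrow> L c a"
  unfolding is_meet_def Lprime_def by (meson le_refl)
lemma meet_le_imp: "is_meet le a b c \<Longrightarrow> le a b \<Longrightarrow> L c a"
  unfolding is_meet_def Lprime_def by (meson le_refl)

lemma le_rc: "le a b \<Longrightarrow> le (a * s) (b * s)"
  using M2'[OF meet_leI] meet_lower2 meet_lower1 by blast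
lemma L_rc: "L a b \<Longrightarrow> L (a * s) (b * s)"
  unfolding Lprime_def using le_rc by blast

definition Gam :: "'a \<Rightarrow> 'a \<Rightarrow> bool" where "Gam p g \<longleftrightarrow> R g (g * p) \<and> L (g * p) p"

lemma G1: "\<exists>g. Gam p g"
proof -
  obtain \<gamma> \<delta> where h: "R \<gamma> \<delta>" "R \<delta> (\<delta> * p)" "\<delta> * p = \<gamma> * p" "is_meet le p p (\<gamma> * p)"
    using M1'[of p p] by blast
  have "L (\<gamma> * p) p" using meet_L_imp[OF h(4)] by simp
  moreover have "R \<gamma> (\<gamma> * p)" using h R_trans by metis
  ultimately show ?thesis unfolding Gam_def by blast
qed

lemma G2: "Gam p g \<Longrightarrow> Gam q h \<Longrightarrow> (L g h \<longleftrightarrow> R p q)"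
  unfolding Gam_def using M5' by blast

lemma K2a: "Gam p g \<Longrightarrow> le g u \<Longrightarrow> L (u * p) p"
proof -
  assume g: "Gam p g" and u: "le g u"
  have "is_meet le (u * p) (g * p) (g * p)" using M2'[OF meet_sym[OF meet_leI[OF u]]] .
  then have "le (g * p) (u * p)" by (rule meet_lower1)
  moreover have "le p (g * p)" using g unfolding Gam_def Lprime_def by blast
  ultimately show ?thesis unfolding Lprime_def using M3' le_trans by blast
qed

lemma K2b: "Gam p g \<Longrightarrow> L (u * p) p \<Longrightarrow> le g u"
proof -
  assume g: "Gam p g" and u: "L (u * p) p"
  obtain x y where h: "R x y" "R y (y * g)" "y * g = x * u" "is_meet le u g (x * u)"
    using M1'[where \<alpha>=u and \<beta>=g] by blast
  have "is_meet le (u * p) (g * p) (x * u * p)" using M2'[OF h(4)] .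
  moreover have "L (u * p) (g * p)" using u g unfolding Gam_def by (meson L_sym L_trans)
  ultimately have "L (x * u * p) (u * p)" using meet_L_imp by blast
  then have yl: "L (y * (g * p)) p" using h(3) u by (metis L_trans mult.assoc)
  have "R (y * g) (y * (g * p))" using g R_lc unfolding Gam_def by blast
  then have yr: "R y (y * (g * p))" using h(2) R_trans by blast
  have "L (y * (g * p)) (g * p)" using yl g unfolding Gam_def by (meson L_sym L_trans)
  then have gy: "Gam (g * p) y" using yr unfolding Gam_def by blast
  obtain k where k: "Gam g k" using G1 by blast
  have "R g (g * p)" using g unfolding Gam_def by blast
  then have "L k y" using G2[OF k gy] by blast
  then have "L (y * g) g" using K2a[OF k] L_le1 by blast
  then have "le g (x * u)" using h(3) L_le2 by metis
  then show "le g u" using M3' le_trans by blast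
qed

lemma K1: "R p q \<Longrightarrow> L (u * p) p \<Longrightarrow> L (u * q) q"
proof -
  assume r: "R p q" and u: "L (u * p) p"
  obtain g where g: "Gam p g" using G1 by blast
  obtain h where h: "Gam q h" using G1 by blast
  have "L g h" using G2[OF g h] r by blast
  moreover have "le g u" using K2b[OF g u] .
  ultimately have "le h u" using L_le2 le_trans by blast
  then show ?thesis using K2a[OF h] by blast
qed

lemma T_le: "R a b \<Longrightarrow> le (x * b) (y * b) \<Longrightarrow> le (x * a) (y * a)"
proof -
  assume r: "R a b" and l: "le (x * b) (y * b)"
  obtain \<gamma> \<delta> where h: "\<delta> * (y * b) = \<gamma> * (x * b)" "is_meet le (x * b) (y * b) (\<gamma> * (x * b))"
    using M1'[where \<alpha>="x * b" and \<beta>="y * b"] by blast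
  have L1: "L (\<gamma> * (x * b)) (x * b)" using meet_le_imp[OF h(2) l] .
  have "(\<gamma> * x) * b = (\<delta> * y) * b" using h(1) by (simp add: mult.assoc)
  then have e: "(\<gamma> * x) * a = (\<delta> * y) * a" using Rs R_sym[OF r] by blast
  have "R (x * b) (x * a)" using R_lc R_sym[OF r] by blast
  then have "L (\<gamma> * (x * a)) (x * a)" using K1 L1 by blast
  moreover have "le (\<delta> * (y * a)) (y * a)" by (rule M3')
  ultimately show ?thesis using e unfolding Lprime_def by (metis le_trans mult.assoc)
qed

lemma T_L: "R a b \<Longrightarrow> L (x * b) (y * b) \<Longrightarrow> L (x * a) (y * a)"
  unfolding Lprime_def using T_le by blast


definition P :: "'a \<times> 'a \<Rightarrow> bool" where "P p \<longleftrightarrow> R (fst p) (snd p)"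
definition Eqv :: "'a \<times> 'a \<Rightarrow> 'a \<times> 'a \<Rightarrow> bool" where
  "Eqv p q \<longleftrightarrow> L (fst p) (fst q) \<and> (\<forall>x y. x * fst p = y * fst q \<longrightarrow> x * snd p = y * snd q)"

lemma P_simp[simp]: "P (a, b) \<longleftrightarrow> R a b" by (simp add: P_def)
lemma Eqv_simp: "Eqv (a, b) (c, d) \<longleftrightarrow> L a c \<and> (\<forall>x y. x * a = y * c \<longrightarrow> x * b = y * d)"
  by (simp add: Eqv_def)

lemma Eqv_refl: "P p \<Longrightarrow> Eqv p p" unfolding Eqv_def P_def using Rs L_refl by metis
lemma Eqv_sym: "Eqv p q \<Longrightarrow> Eqv q p" unfolding Eqv_def using L_sym by metis
lemma Eqv_univ: "Eqv (a, b) (c, d) \<Longrightarrow> x * a = y * c \<Longrightarrow> x * b = y * d"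
  by (simp add: Eqv_def)
lemma Eqv_L: "Eqv (a, b) (c, d) \<Longrightarrow> L a c"
  by (simp add: Eqv_def)

lemma Eqv_trans_ab:
  assumes p: "R a b" "R e f" and h1: "Eqv (a, b) (c, d)" and h2: "Eqv (c, d) (e, f)"
  shows "Eqv (a, b) (e, f)"
proof -
  have lac: "L a c" and lce: "L c e" using h1 h2 by (simp_all add: Eqv_def)
  have "x * b = y * f" if xy: "x * a = y * e" for x y
  proof -
    obtain \<gamma> \<delta> where h: "\<delta> * c = \<gamma> * (x * a)" "is_meet le (x * a) c (\<gamma> * (x * a))"
      using M1'[where \<alpha>="x * a" and \<beta>=c] by blast
    have "le (x * a) c" using M3' lac L_le1 le_trans by blast
    then have l1: "L (\<gamma> * (x * a)) (x * a)" using meet_le_imp[OF h(2)] by blast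
    have "(\<gamma> * x) * a = \<delta> * c" using h(1) by (simp add: mult.assoc)
    then have e1: "(\<gamma> * x) * b = \<delta> * d" using Eqv_univ[OF h1] by blast
    have "\<delta> * c = (\<gamma> * y) * e" using h(1) xy by (simp add: mult.assoc)
    then have e2: "\<delta> * d = (\<gamma> * y) * f" using Eqv_univ[OF h2] by blast
    have l2: "L (\<gamma> * (x * b)) (x * b)" using K1[OF R_lc[OF p(1)] l1] .
    have "L (\<gamma> * (y * e)) (y * e)" using l1 xy by simp
    then have l3: "L (\<gamma> * (y * f)) (y * f)" using K1[OF R_lc[OF p(2)]] by blast
    have "\<gamma> * (x * b) = \<gamma> * (y * f)" using e1 e2 by (simp add: mult.assoc)
    then show ?thesis using cancel[OF l2 l3] by blast
  qed
  then show ?thesis using lac lce L_trans by (simp add: Eqv_def)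
qed

lemma Eqv_trans: "P p \<Longrightarrow> P r \<Longrightarrow> Eqv p q \<Longrightarrow> Eqv q r \<Longrightarrow> Eqv p r"
  using Eqv_trans_ab by (metis P_def prod.collapse)

lemma Eqv_swap_ab:
  assumes p: "R a b" "R c d" and h: "Eqv (a, b) (c, d)"
  shows "Eqv (b, a) (d, c)"
proof -
  have lac: "L a c" using h by (simp add: Eqv_def)
  obtain \<gamma> \<delta> where w: "\<delta> * c = \<gamma> * a" "is_meet le a c (\<gamma> * a)"
    using M1'[where \<alpha>=a and \<beta>=c] by blast
  have la: "L (\<gamma> * a) a" using meet_L_imp[OF w(2) lac] .
  have wb: "\<gamma> * b = \<delta> * d" using Eqv_univ[OF h] w(1) by metis
  have lb: "L (\<gamma> * b) b" using K1[OF p(1) la] .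
  have "L (\<delta> * c) c" using la lac w(1) by (metis L_trans)
  then have ld: "L (\<delta> * d) d" using K1[OF p(2)] by blast
  have lbd: "L b d" using lb ld wb by (metis L_sym L_trans)
  have "x * a = y * c" if xy: "x * b = y * d" for x y
  proof -
    obtain u v where h2: "v * (\<gamma> * b) = u * (x * b)" "is_meet le (x * b) (\<gamma> * b) (u * (x * b))"
      using M1'[where \<alpha>="x * b" and \<beta>="\<gamma> * b"] by blast
    have "le (x * b) (\<gamma> * b)" using M3' lb L_le2 le_trans by blast
    then have l1: "L (u * (x * b)) (x * b)" using meet_le_imp[OF h2(2)] by blast
    have "(u * x) * b = (v * \<gamma>) * b" using h2(1) by (simp add: mult.assoc)
    then have e1: "(u * x) * a = (v * \<gamma>) * a" using Rs R_sym[OF p(1)] by blast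
    have "(u * y) * d = (v * \<delta>) * d" using h2(1) xy wb by (simp add: mult.assoc)
    then have e2: "(u * y) * c = (v * \<delta>) * c" using Rs R_sym[OF p(2)] by blast
    have eq: "u * (x * a) = u * (y * c)" using e1 e2 w(1) by (simp add: mult.assoc)
    have l2: "L (u * (x * a)) (x * a)" using K1[OF R_lc[OF R_sym[OF p(1)]] l1] .
    have "L (u * (y * d)) (y * d)" using l1 xy by simp
    then have l3: "L (u * (y * c)) (y * c)" using K1[OF R_lc[OF R_sym[OF p(2)]]] by blast
    show ?thesis using cancel[OF l2 l3 eq] .
  qed
  then show ?thesis using lbd by (simp add: Eqv_def)
qed

lemma Tx:
  assumes p: "R a b" "R a' b'" and h: "Eqv (a, b) (a', b')" and l: "L (x * b) (y * b')"
  shows "L (x * a) (y * a')"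
proof -
  have hs: "Eqv (b, a) (b', a')" using Eqv_swap_ab[OF p h] .
  obtain u v where w: "v * (y * b') = u * (x * b)" "is_meet le (x * b) (y * b') (u * (x * b))"
    using M1'[where \<alpha>="x * b" and \<beta>="y * b'"] by blast
  have l1: "L (u * (x * b)) (x * b)" using meet_L_imp[OF w(2) l] .
  have "(u * x) * b = (v * y) * b'" using w(1) by (simp add: mult.assoc)
  then have e: "(u * x) * a = (v * y) * a'" using Eqv_univ[OF hs] by blast
  have l2: "L (u * (x * a)) (x * a)" using K1[OF R_lc[OF R_sym[OF p(1)]] l1] .
  have "L (v * (y * b')) (y * b')" using l1 l w(1) by (metis L_trans)
  then have l3: "L (v * (y * a')) (y * a')" using K1[OF R_lc[OF R_sym[OF p(2)]]] by blast
  show ?thesis using l2 l3 e by (metis L_sym L_trans mult.assoc)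
qed


definition sel :: "'a \<times> 'a \<Rightarrow> 'a \<times> 'a \<Rightarrow> 'a \<times> 'a" where
  "sel p q = (SOME gd. snd gd * fst q = fst gd * snd p \<and> is_meet le (snd p) (fst q) (fst gd * snd p))"
definition pr :: "'a \<times> 'a \<Rightarrow> 'a \<times> 'a \<Rightarrow> 'a \<times> 'a" where
  "pr p q = (fst (sel p q) * fst p, snd (sel p q) * snd q)"

lemma pr_spec: "\<exists>\<gamma> \<delta>. pr (a, b) (c, d) = (\<gamma> * a, \<delta> * d) \<and> \<delta> * c = \<gamma> * b \<and> is_meet le b c (\<gamma> * b)"
proof -
  define \<Phi> where "\<Phi> = (\<lambda>gd. snd gd * c = fst gd * b \<and> is_meet le b c (fst gd * b))"
  obtain \<gamma> \<delta> where "\<delta> * c = \<gamma> * b \<and> is_meet le b c (\<gamma> * b)"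
    using M1'[where \<alpha>=b and \<beta>=c] by blast
  then have "\<Phi> (\<gamma>, \<delta>)" by (simp add: \<Phi>_def)
  then have "\<Phi> (SOME gd. \<Phi> gd)" by (rule someI)
  moreover have "sel (a, b) (c, d) = (SOME gd. \<Phi> gd)" by (simp add: sel_def \<Phi>_def)
  ultimately have "\<Phi> (sel (a, b) (c, d))" by simp
  then show ?thesis unfolding pr_def \<Phi>_def by auto
qed

lemma pr_P: "R a b \<Longrightarrow> R c d \<Longrightarrow> P (pr (a, b) (c, d))"
proof -
  assume r: "R a b" "R c d"
  obtain \<gamma> \<delta> where h: "pr (a, b) (c, d) = (\<gamma> * a, \<delta> * d)" "\<delta> * c = \<gamma> * b"
    using pr_spec by blast
  have "R (\<gamma> * a) (\<gamma> * b)" using R_lc[OF r(1)] .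
  moreover have "R (\<delta> * c) (\<delta> * d)" using R_lc[OF r(2)] .
  ultimately show ?thesis using h R_trans by simp
qed

lemma P_pr: "P p \<Longrightarrow> P q \<Longrightarrow> P (pr p q)"
  using pr_P by (metis P_def prod.collapse)

lemma pr_cong_ab:
  assumes p: "R a b" "R c d" "R a' b'" "R c' d'" and e1: "Eqv (a, b) (a', b')" and e2: "Eqv (c, d) (c', d')"
  shows "Eqv (pr (a, b) (c, d)) (pr (a', b') (c', d'))"
proof -
  obtain \<gamma> \<delta> where h: "pr (a, b) (c, d) = (\<gamma> * a, \<delta> * d)" "\<delta> * c = \<gamma> * b" "is_meet le b c (\<gamma> * b)"
    using pr_spec by blast
  obtain \<gamma>' \<delta>' where h': "pr (a', b') (c', d') = (\<gamma>' * a', \<delta>' * d')" "\<delta>' * c' = \<gamma>' * b'" "is_meet le b' c' (\<gamma>' * b')"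
    using pr_spec by blast
  have lbb: "L b b'" using Eqv_L[OF Eqv_swap_ab[OF p(1,3) e1]] .
  have lcc: "L c c'" using Eqv_L[OF e2] .
  have "is_meet le b' c' (\<gamma> * b)" using meet_congL[OF h(3) lbb lcc L_refl] .
  then have "L (\<gamma> * b) (\<gamma>' * b')" using meet_uniq h'(3) by blast
  then have l: "L (\<gamma> * a) (\<gamma>' * a')" using Tx[OF p(1,3) e1] by blast
  have "s * (\<delta> * d) = t * (\<delta>' * d')" if st: "s * (\<gamma> * a) = t * (\<gamma>' * a')" for s t
  proof -
    have "(s * \<gamma>) * a = (t * \<gamma>') * a'" using st by (simp add: mult.assoc)
    then have "(s * \<gamma>) * b = (t * \<gamma>') * b'" using Eqv_univ[OF e1] by blast
    then have "(s * \<delta>) * c = (t * \<delta>') * c'" using h(2) h'(2) by (simp add: mult.assoc)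
    then have "(s * \<delta>) * d = (t * \<delta>') * d'" using Eqv_univ[OF e2] by blast
    then show ?thesis by (simp add: mult.assoc)
  qed
  then show ?thesis using h(1) h'(1) l by (simp add: Eqv_def)
qed

lemma pr_cong: "P p \<Longrightarrow> P q \<Longrightarrow> P p' \<Longrightarrow> P q' \<Longrightarrow> Eqv p p' \<Longrightarrow> Eqv q q' \<Longrightarrow> Eqv (pr p q) (pr p' q')"
  using pr_cong_ab by (metis P_def prod.collapse)

lemma pr_assoc_ab:
  assumes r: "R a b" "R c d" "R e f"
  shows "Eqv (pr (pr (a, b) (c, d)) (e, f)) (pr (a, b) (pr (c, d) (e, f)))"
proof -
  obtain \<gamma> \<delta> where h1: "pr (a, b) (c, d) = (\<gamma> * a, \<delta> * d)" "\<delta> * c = \<gamma> * b" "is_meet le b c (\<gamma> * b)"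
    using pr_spec by blast
  obtain \<gamma>' \<delta>' where h2: "pr (\<gamma> * a, \<delta> * d) (e, f) = (\<gamma>' * (\<gamma> * a), \<delta>' * f)" "\<delta>' * e = \<gamma>' * (\<delta> * d)"
      "is_meet le (\<delta> * d) e (\<gamma>' * (\<delta> * d))"
    using pr_spec by blast
  obtain \<mu> \<nu> where h3: "pr (c, d) (e, f) = (\<mu> * c, \<nu> * f)" "\<nu> * e = \<mu> * d" "is_meet le d e (\<mu> * d)"
    using pr_spec by blast
  obtain \<gamma>'' \<delta>'' where h4: "pr (a, b) (\<mu> * c, \<nu> * f) = (\<gamma>'' * a, \<delta>'' * (\<nu> * f))" "\<delta>'' * (\<mu> * c) = \<gamma>'' * b"
      "is_meet le b (\<mu> * c) (\<gamma>'' * b)"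
    using pr_spec by blast
  have dc: "R d c" using R_sym[OF r(2)] .
  have ba: "R b a" using R_sym[OF r(1)] .
  have A1: "le ((\<delta>'' * \<mu>) * d) (\<delta> * d)"
  proof -
    have "le (\<gamma>'' * b) c" using meet_lower2[OF h4(3)] M3' le_trans by blast
    then have "le (\<gamma>'' * b) (\<gamma> * b)" using meet_greatest[OF h1(3)] meet_lower1[OF h4(3)] by blast
    then have "le ((\<delta>'' * \<mu>) * c) (\<delta> * c)" using h1(2) h4(2) by (simp add: mult.assoc)
    then show ?thesis using T_le[OF dc] by blast
  qed
  have A2: "le ((\<delta>'' * \<mu>) * d) e"
  proof -
    have "le (\<delta>'' * (\<mu> * d)) (\<mu> * d)" by (rule M3')
    then show ?thesis using meet_lower2[OF h3(3)] le_trans by (simp add: mult.assoc)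
  qed
  have A3: "le z ((\<delta>'' * \<mu>) * d)" if z1: "le z (\<delta> * d)" and z2: "le z e" for z
  proof -
    have zd: "le z d" using z1 M3' le_trans by blast
    obtain \<gamma>0 \<delta>0 where w: "\<delta>0 * d = \<gamma>0 * z" "is_meet le z d (\<gamma>0 * z)"
      using M1'[where \<alpha>=z and \<beta>=d] by blast
    have lz: "L (\<delta>0 * d) z" using meet_le_imp[OF w(2) zd] w(1) by simp
    have u1: "le (\<delta>0 * d) (\<delta> * d)" using lz z1 L_le1 le_trans by blast
    have u2: "le (\<delta>0 * d) e" using lz z2 L_le1 le_trans by blast
    have u3: "le (\<delta>0 * d) (\<mu> * d)" using meet_greatest[OF h3(3) _ u2] u1 M3' le_trans by blast
    have v1: "le (\<delta>0 * c) (\<delta> * c)" using T_le[OF r(2) u1] .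
    have v2: "le (\<delta>0 * c) (\<mu> * c)" using T_le[OF r(2) u3] .
    have "le (\<delta> * c) b" using h1(2) M3' by simp
    then have v3: "le (\<delta>0 * c) b" using v1 le_trans by blast
    have "le (\<delta>0 * c) (\<gamma>'' * b)" using meet_greatest[OF h4(3) v3 v2] .
    then have "le (\<delta>0 * c) ((\<delta>'' * \<mu>) * c)" using h4(2) by (simp add: mult.assoc)
    then have "le (\<delta>0 * d) ((\<delta>'' * \<mu>) * d)" using T_le[OF dc] by blast
    then show ?thesis using lz L_le2 le_trans by blast
  qed
  have "is_meet le (\<delta> * d) e ((\<delta>'' * \<mu>) * d)" unfolding is_meet_def using A1 A2 A3 by blast
  then have "L (\<gamma>' * (\<delta> * d)) ((\<delta>'' * \<mu>) * d)" using meet_uniq h2(3) by blast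
  then have "L ((\<gamma>' * \<delta>) * d) ((\<delta>'' * \<mu>) * d)" by (simp add: mult.assoc)
  then have "L ((\<gamma>' * \<delta>) * c) ((\<delta>'' * \<mu>) * c)" using T_L[OF r(2)] by blast
  then have "L ((\<gamma>' * \<gamma>) * b) (\<gamma>'' * b)" using h1(2) h4(2) by (simp add: mult.assoc)
  then have "L ((\<gamma>' * \<gamma>) * a) (\<gamma>'' * a)" using T_L[OF r(1)] by blast
  then have l: "L (\<gamma>' * (\<gamma> * a)) (\<gamma>'' * a)" by (simp add: mult.assoc)
  have "s * (\<delta>' * f) = t * (\<delta>'' * (\<nu> * f))" if st: "s * (\<gamma>' * (\<gamma> * a)) = t * (\<gamma>'' * a)" for s t
  proof -
    have "(s * \<gamma>' * \<gamma>) * a = (t * \<gamma>'') * a" using st by (simp add: mult.assoc)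
    then have "(s * \<gamma>' * \<gamma>) * b = (t * \<gamma>'') * b" using Rs[OF r(1)] by blast
    then have "(s * \<gamma>' * \<delta>) * c = (t * \<delta>'' * \<mu>) * c" using h1(2) h4(2) by (simp add: mult.assoc)
    then have "(s * \<gamma>' * \<delta>) * d = (t * \<delta>'' * \<mu>) * d" using Rs[OF r(2)] by blast
    then have "(s * \<delta>') * e = (t * \<delta>'' * \<nu>) * e" using h2(2) h3(2) by (simp add: mult.assoc)
    then have "(s * \<delta>') * f = (t * \<delta>'' * \<nu>) * f" using Rs[OF r(3)] by blast
    then show ?thesis by (simp add: mult.assoc)
  qed
  then show ?thesis using h1(1) h2(1) h3(1) h4(1) l by (simp add: Eqv_def)
qed


lemma pr_assoc: "P p \<Longrightarrow> P q \<Longrightarrow> P r \<Longrightarrow> Eqv (pr (pr p q) r) (pr p (pr q r))"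
  using pr_assoc_ab by (metis P_def prod.collapse)

lemma pr_idem:
  assumes r: "R a b" and h: "Eqv (pr (a, b) (a, b)) (a, b)"
  shows "a = b"
proof -
  obtain \<gamma> \<delta> where h1: "pr (a, b) (a, b) = (\<gamma> * a, \<delta> * b)" "\<delta> * a = \<gamma> * b"
    using pr_spec by blast
  have e: "Eqv (\<gamma> * a, \<delta> * b) (a, b)" using h h1(1) by simp
  have la: "L (\<gamma> * a) a" using Eqv_L[OF e] .
  have sb: "s * (\<delta> * b) = s * (\<delta> * a)" for s
  proof -
    have "s * (\<gamma> * a) = (s * \<gamma>) * a" by (simp add: mult.assoc)
    then have "s * (\<delta> * b) = (s * \<gamma>) * b" using Eqv_univ[OF e] by blast
    then show ?thesis using h1(2) by (simp add: mult.assoc)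
  qed
  have lb: "L (\<gamma> * b) b" using K1[OF r la] .
  obtain g where g: "Gam (\<delta> * a) g" using G1 by blast
  have l1: "L (g * (\<delta> * a)) (\<delta> * a)" using g unfolding Gam_def by blast
  have l2: "L (\<delta> * a) b" using lb h1(2) by simp
  have "le b (g * (\<delta> * b))" using l1 l2 sb[of g] by (metis L_le2 L_trans)
  moreover have "le (g * (\<delta> * b)) (\<delta> * b)" by (rule M3')
  ultimately have l3: "L (\<delta> * b) b" using M3' le_trans unfolding Lprime_def by blast
  have l4: "L (g * (\<delta> * b)) (\<delta> * b)" using l1 l2 l3 sb[of g] by (metis L_sym L_trans)
  have "\<delta> * b = \<delta> * a" using cancel[OF l4 l1 sb] .
  moreover have "L (\<delta> * a) a" using K1[OF R_sym[OF r] l3] .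
  ultimately show "a = b" using cancel l3 by metis
qed

lemma Eqv_diag: "Eqv (u, u) (v, v) \<longleftrightarrow> L u v" by (simp add: Eqv_def)

lemma pr_diag: "\<exists>w. pr (a, a) (c, c) = (w, w) \<and> is_meet le a c w"
  using pr_spec[of a a c c] by auto

lemma pr_reg1: "R a b \<Longrightarrow> Eqv (pr (a, b) (b, a)) (a, a)"
proof -
  assume r: "R a b"
  obtain \<gamma> \<delta> where h: "pr (a, b) (b, a) = (\<gamma> * a, \<delta> * a)" "\<delta> * b = \<gamma> * b" "is_meet le b b (\<gamma> * b)"
    using pr_spec by blast
  have "L (\<gamma> * b) b" using meet_L_imp[OF h(3)] by simp
  then have l: "L (\<gamma> * a) a" using K1[OF R_sym[OF r]] by blast
  have "s * (\<delta> * a) = t * a" if st: "s * (\<gamma> * a) = t * a" for s t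
  proof -
    have "(s * \<gamma>) * a = t * a" using st by (simp add: mult.assoc)
    then have "(s * \<gamma>) * b = t * b" using Rs[OF r] by blast
    then have "(s * \<delta>) * b = t * b" using h(2) by (simp add: mult.assoc)
    then have "(s * \<delta>) * a = t * a" using Rs[OF R_sym[OF r]] by blast
    then show ?thesis by (simp add: mult.assoc)
  qed
  then show ?thesis using h(1) l by (simp add: Eqv_def)
qed

lemma pr_reg2: "R a b \<Longrightarrow> Eqv (pr (a, a) (a, b)) (a, b)"
proof -
  assume r: "R a b"
  obtain \<gamma> \<delta> where h: "pr (a, a) (a, b) = (\<gamma> * a, \<delta> * b)" "\<delta> * a = \<gamma> * a" "is_meet le a a (\<gamma> * a)"
    using pr_spec by blast
  have l: "L (\<gamma> * a) a" using meet_L_imp[OF h(3)] by simp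
  have "s * (\<delta> * b) = t * b" if st: "s * (\<gamma> * a) = t * a" for s t
  proof -
    have "(s * \<delta>) * a = t * a" using st h(2) by (simp add: mult.assoc)
    then have "(s * \<delta>) * b = t * b" using Rs[OF r] by blast
    then show ?thesis by (simp add: mult.assoc)
  qed
  then show ?thesis using h(1) l by (simp add: Eqv_def)
qed

lemma pr_gen: "R a b \<Longrightarrow> Gam a g \<Longrightarrow> Gam b h \<Longrightarrow> Eqv (pr (g * a, g) (h, h * b)) (a, b)"
proof -
  assume r: "R a b" and g: "Gam a g" and hh: "Gam b h"
  obtain \<gamma> \<delta> where w: "pr (g * a, g) (h, h * b) = (\<gamma> * (g * a), \<delta> * (h * b))" "\<delta> * h = \<gamma> * g" "is_meet le g h (\<gamma> * g)"
    using pr_spec by blast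
  have "L g h" using G2[OF g hh] r by blast
  then have "L (\<gamma> * g) g" using meet_L_imp[OF w(3)] by blast
  then have "le g (\<gamma> * g)" by (rule L_le2)
  then have "L ((\<gamma> * g) * a) a" using K2a[OF g] by blast
  then have l: "L (\<gamma> * (g * a)) a" by (simp add: mult.assoc)
  have "s * (\<delta> * (h * b)) = t * b" if st: "s * (\<gamma> * (g * a)) = t * a" for s t
  proof -
    have "(s * \<gamma> * g) * a = t * a" using st by (simp add: mult.assoc)
    then have "(s * \<gamma> * g) * b = t * b" using Rs[OF r] by blast
    moreover have "s * (\<delta> * (h * b)) = (s * (\<delta> * h)) * b" by (simp add: mult.assoc)
    ultimately show ?thesis using w(2) by (simp add: mult.assoc)
  qed
  then show ?thesis using w(1) l by (simp add: Eqv_def)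
qed

lemma pr_hom: "Gam s g \<Longrightarrow> Gam t h \<Longrightarrow> Gam (s * t) k \<Longrightarrow> Eqv (pr (g, g * s) (h, h * t)) (k, k * (s * t))"
proof -
  assume g: "Gam s g" and hh: "Gam t h" and k: "Gam (s * t) k"
  obtain \<gamma> \<delta> where w: "pr (g, g * s) (h, h * t) = (\<gamma> * g, \<delta> * (h * t))" "\<delta> * h = \<gamma> * (g * s)" "is_meet le (g * s) h (\<gamma> * (g * s))"
    using pr_spec by blast
  have r1: "R (\<gamma> * g) (\<gamma> * (g * s))" using g R_lc unfolding Gam_def by blast
  have r2: "R (\<delta> * h) (\<delta> * (h * t))" using hh R_lc unfolding Gam_def by blast
  have e: "\<delta> * (h * t) = (\<gamma> * g) * (s * t)" using w(2) by (metis mult.assoc)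
  have r: "R (\<gamma> * g) ((\<gamma> * g) * (s * t))" using r1 r2 w(2) e R_trans by metis
  have m: "is_meet le (g * s * t) (h * t) (\<gamma> * (g * s) * t)" using M2'[OF w(3)] .
  have l1: "L (g * s * t) (s * t)" using L_rc g unfolding Gam_def by (metis mult.assoc)
  have l2: "L (h * t) t" using hh unfolding Gam_def by blast
  have m2: "is_meet le (s * t) t (\<gamma> * (g * s) * t)" using meet_congL[OF m l1 l2 L_refl] .
  have "L (\<gamma> * (g * s) * t) (s * t)" using meet_le_imp[OF m2 M3'] .
  then have "L ((\<gamma> * g) * (s * t)) (s * t)" by (simp add: mult.assoc)
  then have gg: "Gam (s * t) (\<gamma> * g)" using r unfolding Gam_def by blast
  have lk: "L (\<gamma> * g) k" using G2[OF gg k] by simp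
  have "x * (\<delta> * (h * t)) = y * (k * (s * t))" if xy: "x * (\<gamma> * g) = y * k" for x y
    using xy e by (metis mult.assoc)
  then show ?thesis using w(1) lk by (simp add: Eqv_def)
qed

end


lemma inv_unique_comm:
  assumes sg: "is_semigroup Q m"
    and comm: "\<And>e g. e \<in> Q \<Longrightarrow> g \<in> Q \<Longrightarrow> m e e = e \<Longrightarrow> m g g = g \<Longrightarrow> m e g = m g e"
    and a: "a \<in> Q" and ib: "is_inverse_in Q m a b" and ic: "is_inverse_in Q m a c"
  shows "b = c"
proof -
  have cl: "\<And>x y. x \<in> Q \<Longrightarrow> y \<in> Q \<Longrightarrow> m x y \<in> Q" using sg unfolding is_semigroup_def by blast
  have as: "\<And>x y z. x \<in> Q \<Longrightarrow> y \<in> Q \<Longrightarrow> z \<in> Q \<Longrightarrow> m (m x y) z = m x (m y z)"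
    using sg unfolding is_semigroup_def by blast
  have bQ: "b \<in> Q" and cQ: "c \<in> Q" using ib ic by (auto simp: is_inverse_in_def)
  have b1: "m (m a b) a = a" and b2: "m (m b a) b = b" using ib by (auto simp: is_inverse_in_def)
  have c1: "m (m a c) a = a" and c2: "m (m c a) c = c" using ic by (auto simp: is_inverse_in_def)
  have ba: "m (m b a) (m b a) = m b a" using b1 a bQ by (metis as cl)
  have ca: "m (m c a) (m c a) = m c a" using c1 a cQ by (metis as cl)
  have ab: "m (m a b) (m a b) = m a b" using b1 a bQ by (metis as cl)
  have ac: "m (m a c) (m a c) = m a c" using c1 a cQ by (metis as cl)
  have "b = m (m b a) b" using b2 by simp
  also have "\<dots> = m (m b (m (m a c) a)) b" using c1 by simp
  also have "\<dots> = m (m (m b a) (m c a)) b" using a bQ cQ by (simp add: as cl)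
  also have "\<dots> = m (m (m c a) (m b a)) b" using comm[OF cl[OF bQ a] cl[OF cQ a] ba ca] by simp
  also have "\<dots> = m c (m a b)" using a bQ cQ b2 by (simp add: as cl)
  finally have 1: "b = m c (m a b)" .
  have "c = m c (m a c)" using c2 a cQ by (simp add: as)
  also have "\<dots> = m c (m (m (m a b) a) c)" using b1 by simp
  also have "\<dots> = m c (m (m a b) (m a c))" using a bQ cQ by (simp add: as cl)
  also have "\<dots> = m c (m (m a c) (m a b))" using comm[OF cl[OF a bQ] cl[OF a cQ] ab ac] by simp
  also have "\<dots> = m (m (m c a) c) (m a b)" using a bQ cQ by (simp add: as cl)
  also have "\<dots> = m c (m a b)" using c2 by simp
  finally show ?thesis using 1 by simp
qed

context Mx
begin

definition rep :: "'a \<times> 'a \<Rightarrow> 'a \<times> 'a" where "rep p = (SOME q. P q \<and> Eqv q p)"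
definition QQ :: "('a \<times> 'a) set" where "QQ = rep ` {p. P p}"
definition mm :: "'a \<times> 'a \<Rightarrow> 'a \<times> 'a \<Rightarrow> 'a \<times> 'a" where "mm x y = rep (pr x y)"

lemma rep: "P p \<Longrightarrow> P (rep p) \<and> Eqv (rep p) p"
  unfolding rep_def by (rule someI[of _ p]) (simp add: Eqv_refl)

lemma rep_eq: "P p \<Longrightarrow> P q \<Longrightarrow> rep p = rep q \<longleftrightarrow> Eqv p q"
proof
  assume p: "P p" "P q" and e: "rep p = rep q"
  have "Eqv p (rep p)" using rep[OF p(1)] Eqv_sym by blast
  moreover have "Eqv (rep q) q" using rep[OF p(2)] by blast
  ultimately show "Eqv p q" using e Eqv_trans p rep by metis
next
  assume p: "P p" "P q" and e: "Eqv p q"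
  have "{r. P r \<and> Eqv r p} = {r. P r \<and> Eqv r q}"
    using e p Eqv_trans Eqv_sym by blast
  then show "rep p = rep q" unfolding rep_def by (metis mem_Collect_eq)
qed

lemma QQ_P: "x \<in> QQ \<Longrightarrow> P x" unfolding QQ_def using rep by blast
lemma QQ_rep: "x \<in> QQ \<Longrightarrow> rep x = x"
  unfolding QQ_def using rep rep_eq by blast
lemma rep_QQ: "P p \<Longrightarrow> rep p \<in> QQ" unfolding QQ_def by blast
lemma QQ_Eqv: "x \<in> QQ \<Longrightarrow> Eqv x x" using QQ_P Eqv_refl by blast

lemma mm_eq: "x \<in> QQ \<Longrightarrow> y \<in> QQ \<Longrightarrow> P p \<Longrightarrow> P q \<Longrightarrow> Eqv x p \<Longrightarrow> Eqv y q \<Longrightarrow> mm x y = rep (pr p q)"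
  unfolding mm_def using rep_eq pr_cong P_pr QQ_P by metis

lemma mm_rep: "P p \<Longrightarrow> P q \<Longrightarrow> mm (rep p) (rep q) = rep (pr p q)"
  using mm_eq rep rep_QQ by metis

lemma mm_QQ: "x \<in> QQ \<Longrightarrow> y \<in> QQ \<Longrightarrow> mm x y \<in> QQ"
  unfolding mm_def using rep_QQ P_pr QQ_P by blast

lemma QQ_sg: "is_semigroup QQ mm"
  unfolding is_semigroup_def
proof (intro conjI ballI)
  fix x y z assume q: "x \<in> QQ" "y \<in> QQ" "z \<in> QQ"
  show "mm x y \<in> QQ" using mm_QQ q by blast
  have px: "P x" "P y" "P z" using q QQ_P by blast+
  have "mm (mm x y) z = rep (pr (pr x y) z)"
    using mm_eq[OF mm_QQ[OF q(1,2)] q(3) P_pr[OF px(1,2)] px(3)] rep[OF P_pr[OF px(1,2)]] QQ_Eqv[OF q(3)]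
    unfolding mm_def by blast
  also have "\<dots> = rep (pr x (pr y z))" using rep_eq pr_assoc px P_pr by metis
  also have "\<dots> = mm x (mm y z)"
    using mm_eq[OF q(1) mm_QQ[OF q(2,3)] px(1) P_pr[OF px(2,3)]] rep[OF P_pr[OF px(2,3)]] QQ_Eqv[OF q(1)]
    unfolding mm_def by metis
  finally show "mm (mm x y) z = mm x (mm y z)" .
qed

lemma QQ_idem: "e \<in> QQ \<Longrightarrow> mm e e = e \<Longrightarrow> fst e = snd e"
proof -
  assume e: "e \<in> QQ" "mm e e = e"
  have pe: "P e" using QQ_P e by blast
  have "rep (pr e e) = rep e" using e QQ_rep unfolding mm_def by simp
  then have "Eqv (pr e e) e" using rep_eq P_pr pe by blast
  then show ?thesis using pr_idem pe by (metis P_def prod.collapse)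
qed

lemma QQ_comm: "e \<in> QQ \<Longrightarrow> g \<in> QQ \<Longrightarrow> mm e e = e \<Longrightarrow> mm g g = g \<Longrightarrow> mm e g = mm g e"
proof -
  assume q: "e \<in> QQ" "g \<in> QQ" and i: "mm e e = e" "mm g g = g"
  obtain u where u: "e = (u, u)" using QQ_idem[OF q(1) i(1)] by (metis prod.collapse)
  obtain v where v: "g = (v, v)" using QQ_idem[OF q(2) i(2)] by (metis prod.collapse)
  obtain w where w: "pr (u, u) (v, v) = (w, w)" "is_meet le u v w" using pr_diag by blast
  obtain w' where w': "pr (v, v) (u, u) = (w', w')" "is_meet le v u w'" using pr_diag by blast
  have "L w w'" using meet_uniq[OF w(2) meet_sym[OF w'(2)]] .
  then have "rep (w, w) = rep (w', w')" using rep_eq Eqv_diag by simp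
  then show ?thesis unfolding mm_def using u v w w' by simp
qed

lemma QQ_inv: "x \<in> QQ \<Longrightarrow> is_inverse_in QQ mm x (rep (snd x, fst x))"
proof -
  assume x: "x \<in> QQ"
  obtain a b where ab: "x = (a, b)" by fastforce
  have "P x" using QQ_P x by blast
  then have r: "R a b" using ab by simp
  have xr: "x = rep (a, b)" using QQ_rep x ab by simp
  have "mm x (rep (b, a)) = rep (a, a)"
    using xr mm_rep[of "(a, b)" "(b, a)"] r R_sym rep_eq[of "pr (a, b) (b, a)" "(a, a)"] pr_reg1 P_pr by auto
  then have 1: "mm (mm x (rep (b, a))) x = x"
    using xr mm_rep[of "(a, a)" "(a, b)"] r rep_eq[of "pr (a, a) (a, b)" "(a, b)"] pr_reg2 P_pr by auto
  have "mm (rep (b, a)) x = rep (b, b)"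
    using xr mm_rep[of "(b, a)" "(a, b)"] r R_sym rep_eq[of "pr (b, a) (a, b)" "(b, b)"] pr_reg1 P_pr by auto
  then have 2: "mm (mm (rep (b, a)) x) (rep (b, a)) = rep (b, a)"
    using mm_rep[of "(b, b)" "(b, a)"] r R_sym rep_eq[of "pr (b, b) (b, a)" "(b, a)"] pr_reg2 P_pr by auto
  show ?thesis unfolding is_inverse_in_def using 1 2 ab rep_QQ r R_sym by auto
qed

lemma QQ_isg: "inverse_semigroup QQ mm"
  unfolding inverse_semigroup_def
proof (intro conjI ballI QQ_sg)
  fix a assume a: "a \<in> QQ"
  show "\<exists>!b. is_inverse_in QQ mm a b"
    using QQ_inv[OF a] inv_unique_comm[OF QQ_sg QQ_comm a] by blast
qed

lemma QI: "invsg QQ mm" using QQ_isg by (rule invsg.intro)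

lemma iv_QQ: "x \<in> QQ \<Longrightarrow> inv_in QQ mm x = rep (snd x, fst x)"
  using invsg.inv_uniq[OF QI] QQ_inv by metis


definition gs :: "'a \<Rightarrow> 'a" where "gs s = (SOME g. Gam s g)"
definition ff :: "'a \<Rightarrow> 'a \<times> 'a" where "ff s = rep (gs s, gs s * s)"

lemma gs_Gam: "Gam s (gs s)" unfolding gs_def using G1 by (rule someI_ex)
lemma gs_P: "P (gs s, gs s * s)" using gs_Gam unfolding Gam_def by simp
lemma ff_QQ: "ff s \<in> QQ" unfolding ff_def using gs_P by (rule rep_QQ)
lemma ff_Eqv: "Eqv (ff s) (gs s, gs s * s)" unfolding ff_def using rep gs_P by blast
lemma ff_P: "P (ff s)" using ff_QQ QQ_P by blast

lemma ff_hom: "ff (s * t) = mm (ff s) (ff t)"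
proof -
  have "mm (ff s) (ff t) = rep (pr (gs s, gs s * s) (gs t, gs t * t))"
    unfolding ff_def using mm_rep gs_P by blast
  also have "\<dots> = rep (gs (s * t), gs (s * t) * (s * t))"
    using rep_eq P_pr gs_P pr_hom[OF gs_Gam gs_Gam gs_Gam] by blast
  finally show ?thesis unfolding ff_def by simp
qed

lemma ff_inj: "inj ff"
proof (rule injI)
  fix s t assume e: "ff s = ff t"
  define g where "g = gs s"
  define h where "h = gs t"
  have gg: "Gam s g" and hh: "Gam t h" using gs_Gam g_def h_def by blast+
  have E: "Eqv (g, g * s) (h, h * t)" using e rep_eq gs_P unfolding ff_def g_def h_def by blast
  have lgh: "L g h" using Eqv_L[OF E] .
  obtain u v where w: "v * h = u * g" "is_meet le g h (u * g)"
    using M1'[where \<alpha>=g and \<beta>=h] by blast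
  have lu: "L (u * g) g" using meet_L_imp[OF w(2) lgh] .
  have "u * (g * s) = v * (h * t)" using Eqv_univ[OF E] w(1) by metis
  then have eq: "(u * g) * s = (u * g) * t" using w(1) by (metis mult.assoc)
  have l1: "L ((u * g) * s) s" using K2a[OF gg L_le2[OF lu]] .
  have "le h (u * g)" using lu lgh by (meson L_le2 L_le1 le_trans)
  then have l2: "L ((u * g) * t) t" using K2a[OF hh] by blast
  show "s = t" using cancel[OF l1 l2 eq] .
qed

lemma ff_iv: "inv_in QQ mm (ff s) = rep (gs s * s, gs s)"
proof -
  have "inv_in QQ mm (ff s) = rep (snd (ff s), fst (ff s))" using iv_QQ ff_QQ by blast
  also have "\<dots> = rep (gs s * s, gs s)"
  proof -
    have "Eqv (fst (ff s), snd (ff s)) (gs s, gs s * s)" using ff_Eqv by simp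
    then have "Eqv (snd (ff s), fst (ff s)) (gs s * s, gs s)"
      using Eqv_swap_ab ff_P gs_P by (metis P_def P_simp prod.collapse)
    moreover have "P (snd (ff s), fst (ff s))" using ff_P R_sym by (simp add: P_def)
    moreover have "P (gs s * s, gs s)" using gs_P R_sym by simp
    ultimately show ?thesis using rep_eq by blast
  qed
  finally show ?thesis .
qed

lemma ff_F: "mm (ff s) (inv_in QQ mm (ff s)) = rep (gs s, gs s)"
proof -
  have "mm (ff s) (inv_in QQ mm (ff s)) = rep (pr (gs s, gs s * s) (gs s * s, gs s))"
    unfolding ff_iv unfolding ff_def using mm_rep gs_P R_sym by simp
  also have "\<dots> = rep (gs s, gs s)"
    using rep_eq P_pr gs_P R_sym pr_reg1 by simp
  finally show ?thesis .
qed

lemma ff_E: "mm (inv_in QQ mm (ff s)) (ff s) = rep (s, s)"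
proof -
  have "mm (inv_in QQ mm (ff s)) (ff s) = rep (pr (gs s * s, gs s) (gs s, gs s * s))"
    unfolding ff_iv unfolding ff_def using mm_rep gs_P R_sym by simp
  also have "\<dots> = rep (gs s * s, gs s * s)"
    using rep_eq P_pr gs_P R_sym pr_reg1 by simp
  also have "\<dots> = rep (s, s)"
    using rep_eq Eqv_diag gs_Gam unfolding Gam_def by simp
  finally show ?thesis .
qed

lemma ff_R: "greenR_in QQ mm (ff a) (ff b) \<longleftrightarrow> R a b"
proof -
  have "greenR_in QQ mm (ff a) (ff b) \<longleftrightarrow> rep (gs a, gs a) = rep (gs b, gs b)"
    using invsg.greenR_char[OF QI ff_QQ ff_QQ] ff_F by simp
  also have "\<dots> \<longleftrightarrow> L (gs a) (gs b)" using rep_eq Eqv_diag by simp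
  also have "\<dots> \<longleftrightarrow> R a b" using G2[OF gs_Gam gs_Gam] .
  finally show ?thesis .
qed

lemma ff_L: "leL_in QQ mm (ff a) (ff b) \<longleftrightarrow> le a b"
proof -
  obtain w where w: "pr (a, a) (b, b) = (w, w)" "is_meet le a b w" using pr_diag by blast
  have "mm (rep (a, a)) (rep (b, b)) = rep (w, w)" using mm_rep[of "(a, a)" "(b, b)"] w by simp
  then have "leL_in QQ mm (ff a) (ff b) \<longleftrightarrow> rep (a, a) = rep (w, w)"
    using invsg.leL_E[OF QI ff_QQ ff_QQ] ff_E by simp
  also have "\<dots> \<longleftrightarrow> L a w" using rep_eq Eqv_diag by simp
  also have "\<dots> \<longleftrightarrow> le a b"
    using w(2) unfolding is_meet_def Lprime_def by (meson le_refl le_trans)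
  finally show ?thesis .
qed

lemma ff_straight: "q \<in> QQ \<Longrightarrow> \<exists>a b. q = mm (inv_in QQ mm (ff a)) (ff b) \<and> greenR_in QQ mm (ff a) (ff b)"
proof -
  assume q: "q \<in> QQ"
  obtain a b where ab: "q = (a, b)" by fastforce
  have "P q" using QQ_P q by blast
  then have r: "R a b" using ab by simp
  have "mm (inv_in QQ mm (ff a)) (ff b) = rep (pr (gs a * a, gs a) (gs b, gs b * b))"
    unfolding ff_iv unfolding ff_def using mm_rep gs_P R_sym by simp
  also have "\<dots> = rep (a, b)"
    using rep_eq P_pr gs_P R_sym r pr_gen[OF r gs_Gam gs_Gam] by simp
  also have "\<dots> = q" using QQ_rep q ab by simp
  finally show ?thesis using ff_R r by metis
qed

theorem backward: "\<exists>(Q :: ('a \<times> 'a) set) m f.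
            straight_left_I_order_embedding f Q m \<and>
            (\<forall>a b. greenR_in Q m (f a) (f b) \<longleftrightarrow> R a b) \<and>
            (\<forall>a b. leL_in Q m (f a) (f b) \<longleftrightarrow> le a b)"
proof (intro exI conjI allI)
  show "straight_left_I_order_embedding ff QQ mm"
    unfolding straight_left_I_order_embedding_def
    using QQ_isg ff_inj ff_QQ ff_hom ff_straight by blast
  show "greenR_in QQ mm (ff a) (ff b) \<longleftrightarrow> R a b" for a b by (rule ff_R)
  show "leL_in QQ mm (ff a) (ff b) \<longleftrightarrow> le a b" for a b by (rule ff_L)
qed

end

theorem theorem3p7:
  fixes R' :: "'a::semigroup_mult \<Rightarrow> 'a \<Rightarrow> bool"
    and le_l :: "'a \<Rightarrow> 'a \<Rightarrow> bool"
  shows "(\<exists>(Q :: ('a \<times> 'a) set) m f.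
            straight_left_I_order_embedding f Q m \<and>
            (\<forall>a b. greenR_in Q m (f a) (f b) \<longleftrightarrow> R' a b) \<and>
            (\<forall>a b. leL_in Q m (f a) (f b) \<longleftrightarrow> le_l a b))
    \<longleftrightarrow>
         (equivalence_rel R' \<and> left_compatible R' \<and>
          preorder_rel le_l \<and> meet_semilattice_classes le_l \<and>
          M1 R' le_l \<and> M2 le_l \<and> M3 le_l \<and> M4 R' \<and> M5 R' le_l \<and> M6 le_l)"
proof
  assume "\<exists>(Q :: ('a \<times> 'a) set) m f.
            straight_left_I_order_embedding f Q m \<and>
            (\<forall>a b. greenR_in Q m (f a) (f b) \<longleftrightarrow> R' a b) \<and>
            (\<forall>a b. leL_in Q m (f a) (f b) \<longleftrightarrow> le_l a b)"
  then obtain Q :: "('a \<times> 'a) set" and m f where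
    s: "straight_left_I_order_embedding f Q m" and
    hR: "\<forall>a b. greenR_in Q m (f a) (f b) \<longleftrightarrow> R' a b" and
    hL: "\<forall>a b. leL_in Q m (f a) (f b) \<longleftrightarrow> le_l a b" by blast
  have e: "emb Q m f"
    using s unfolding straight_left_I_order_embedding_def
    by (intro emb.intro invsg.intro emb_axioms.intro) auto
  have RR: "emb.RR Q m f = R'" using hR by (intro ext) (simp add: emb.RR_def[OF e])
  have LE: "emb.LE Q m f = le_l" using hL by (intro ext) (simp add: emb.LE_def[OF e])
  show "equivalence_rel R' \<and> left_compatible R' \<and>
          preorder_rel le_l \<and> meet_semilattice_classes le_l \<and>
          M1 R' le_l \<and> M2 le_l \<and> M3 le_l \<and> M4 R' \<and> M5 R' le_l \<and> M6 le_l"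
    using emb.forward[OF e] unfolding RR LE .
next
  assume h: "equivalence_rel R' \<and> left_compatible R' \<and>
          preorder_rel le_l \<and> meet_semilattice_classes le_l \<and>
          M1 R' le_l \<and> M2 le_l \<and> M3 le_l \<and> M4 R' \<and> M5 R' le_l \<and> M6 le_l"
  then have "Mx R' le_l" by (intro Mx.intro) blast+
  then show "\<exists>(Q :: ('a \<times> 'a) set) m f.
            straight_left_I_order_embedding f Q m \<and>
            (\<forall>a b. greenR_in Q m (f a) (f b) \<longleftrightarrow> R' a b) \<and>
            (\<forall>a b. leL_in Q m (f a) (f b) \<longleftrightarrow> le_l a b)"
    by (rule Mx.backward)
qed


end
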